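(* Let $D > d \geq 1$ be integers, let $\sigma > 0$, and let $\mathcal{S}_1, \mathcal{S}_2 \subset \mathbb{R}^D$ be two $d$-dimensional linear subspaces. Let $y = x + n$, where $x \in \mathcal{S}_1$ is fixed and $n \sim \mathcal{N}(0, \sigma^2 I_D)$. Define $$\mu(y) = 1 - \frac{\mathrm{dist}(y, \mathcal{S}_1)}{\mathrm{dist}(y, \mathcal{S}_2)}.$$ Then there is an absolute constant $c > 0$ such that for every $\varepsilon \in (0,1)$, with probability at least $1 - 4e^{-c\varepsilon^2 (D-d)}$, $$1 - \frac{(1+\varepsilon)\sqrt{\sigma^2 (D-d)}}{(1-\varepsilon)\sqrt{\sigma^2(D-d) + \mathrm{dist}(x,\mathcal{S}_2)^2}} \;\leq\; \mu(y) \;\leq\; 1 - \frac{(1-\varepsilon)\sqrt{\sigma^2 (D-d)}}{(1+\varepsilon)\sqrt{\sigma^2(D-d) + \mathrm{dist}(x,\mathcal{S}_2)^2}}.$$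
   Context: For a linear subspace $\mathcal{S} \subset \mathbb{R}^D$ with orthonormal basis matrix $U$, $\mathrm{dist}(z, \mathcal{S}) = \min_{w \in \mathcal{S}} \|z - w\|_2 = \|z - UU^T z\|_2$. *)

theory Defs
  imports "HOL-Probability.Probability"
begin

text \<open>Vectors of R^D are represented as functions nat => real; only the
components with index < D are meaningful.  Elements of subspaces are
normalised to vanish at indices >= D.\<close>

definition vecs :: "nat \<Rightarrow> (nat \<Rightarrow> real) set" where
  "vecs D = {v. \<forall>i\<ge>D. v i = 0}"

definition lin_subspace :: "nat \<Rightarrow> (nat \<Rightarrow> real) set \<Rightarrow> bool" where
  "lin_subspace D S \<longleftrightarrow> S \<subseteq> vecs D \<and> (\<lambda>_. 0) \<in> S \<and>
     (\<forall>v\<in>S. \<forall>w\<in>S. (\<lambda>i. v i + w i) \<in> S) \<and>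
     (\<forall>a::real. \<forall>v\<in>S. (\<lambda>i. a * v i) \<in> S)"

definition subspace_of_dim :: "nat \<Rightarrow> nat \<Rightarrow> (nat \<Rightarrow> real) set \<Rightarrow> bool" where
  "subspace_of_dim D d S \<longleftrightarrow> lin_subspace D S \<and>
     (\<exists>u :: nat \<Rightarrow> nat \<Rightarrow> real. (\<forall>j<d. u j \<in> S) \<and>
        (\<forall>a. (\<forall>i. (\<Sum>j<d. a j * u j i) = 0) \<longrightarrow> (\<forall>j<d. a j = 0)) \<and>
        (\<forall>v\<in>S. \<exists>a. v = (\<lambda>i. \<Sum>j<d. a j * u j i)))"

definition enorm :: "nat \<Rightarrow> (nat \<Rightarrow> real) \<Rightarrow> real" where
  "enorm D v = sqrt (\<Sum>i<D. (v i)\<^sup>2)"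

definition sdist :: "nat \<Rightarrow> (nat \<Rightarrow> real) \<Rightarrow> (nat \<Rightarrow> real) set \<Rightarrow> real" where
  "sdist D z S = Inf ((\<lambda>w. enorm D (\<lambda>i. z i - w i)) ` S)"

definition gauss_noise :: "nat \<Rightarrow> real \<Rightarrow> (nat \<Rightarrow> real) measure" where
  "gauss_noise D \<sigma> = PiM {..<D} (\<lambda>_. density lborel (normal_density 0 \<sigma>))"

definition affinity_mu :: "nat \<Rightarrow> (nat \<Rightarrow> real) set \<Rightarrow> (nat \<Rightarrow> real) set
    \<Rightarrow> (nat \<Rightarrow> real) \<Rightarrow> real" where
  "affinity_mu D S1 S2 y = 1 - sdist D y S1 / sdist D y S2"

end

theory Submission
  imports Defs
begin


lemma normal_tilt_pointwise:
  fixes \<sigma> b c x :: real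
  assumes "\<sigma> > 0" "2 * c * \<sigma>\<^sup>2 < 1"
  defines "q \<equiv> 1 - 2 * c * \<sigma>\<^sup>2"
  defines "\<tau> \<equiv> \<sigma> / sqrt q"
  shows "normal_density 0 \<sigma> x * exp (b * x + c * x\<^sup>2) =
         (1 / sqrt q * exp (b\<^sup>2 * \<sigma>\<^sup>2 / (2 * q))) * normal_density (b * \<tau>\<^sup>2) \<tau> x"
proof -
  have q: "q > 0" using assms unfolding q_def by simp
  have t2: "\<tau>\<^sup>2 = \<sigma>\<^sup>2 / q" using q unfolding \<tau>_def by (simp add: power_divide)
  have tp: "\<tau> > 0" using q assms unfolding \<tau>_def by simp
  have sq: "sqrt (2 * pi * \<tau>\<^sup>2) = sqrt (2 * pi * \<sigma>\<^sup>2) / sqrt q"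
    using q by (simp add: t2 real_sqrt_divide real_sqrt_mult)
  have e: "- x\<^sup>2 / (2 * \<sigma>\<^sup>2) + (b * x + c * x\<^sup>2) =
        b\<^sup>2 * \<sigma>\<^sup>2 / (2 * q) + (- (x - b * \<tau>\<^sup>2)\<^sup>2 / (2 * \<tau>\<^sup>2))"
  proof -
    have c: "c = (1 - q) / (2 * \<sigma>\<^sup>2)" using assms(1) unfolding q_def by (simp add: field_simps)
    show ?thesis using q assms(1) unfolding t2 c by (simp add: field_simps power2_eq_square)
  qed
  have "normal_density 0 \<sigma> x * exp (b * x + c * x\<^sup>2) =
     1 / sqrt (2 * pi * \<sigma>\<^sup>2) * exp (- x\<^sup>2 / (2 * \<sigma>\<^sup>2) + (b * x + c * x\<^sup>2))"
    unfolding normal_density_def exp_add by simp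
  also have "\<dots> = 1 / sqrt (2 * pi * \<sigma>\<^sup>2) * exp (b\<^sup>2 * \<sigma>\<^sup>2 / (2 * q)) * exp (- (x - b * \<tau>\<^sup>2)\<^sup>2 / (2 * \<tau>\<^sup>2))"
    unfolding e exp_add by simp
  also have "\<dots> = (1 / sqrt q * exp (b\<^sup>2 * \<sigma>\<^sup>2 / (2 * q))) * normal_density (b * \<tau>\<^sup>2) \<tau> x"
    unfolding normal_density_def sq using q by simp
  finally show ?thesis .
qed

lemma normal_mgf_tilt:
  fixes \<sigma> b c :: real
  assumes "\<sigma> > 0" "2 * c * \<sigma>\<^sup>2 < 1"
  shows "(\<integral>\<^sup>+x. ennreal (exp (b * x + c * x\<^sup>2)) \<partial>density lborel (normal_density 0 \<sigma>)) =
    ennreal (1 / sqrt (1 - 2 * c * \<sigma>\<^sup>2) * exp (b\<^sup>2 * \<sigma>\<^sup>2 / (2 * (1 - 2 * c * \<sigma>\<^sup>2))))"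
proof -
  define q where "q = 1 - 2 * c * \<sigma>\<^sup>2"
  define \<tau> where "\<tau> = \<sigma> / sqrt q"
  define K where "K = 1 / sqrt q * exp (b\<^sup>2 * \<sigma>\<^sup>2 / (2 * q))"
  have q: "q > 0" using assms unfolding q_def by simp
  have K: "K \<ge> 0" using q unfolding K_def by simp
  have "(\<integral>\<^sup>+x. ennreal (exp (b * x + c * x\<^sup>2)) \<partial>density lborel (normal_density 0 \<sigma>))
      = (\<integral>\<^sup>+x. ennreal (normal_density 0 \<sigma> x) * ennreal (exp (b * x + c * x\<^sup>2)) \<partial>lborel)"
    by (subst nn_integral_density) auto
  also have "\<dots> = (\<integral>\<^sup>+x. ennreal K * ennreal (normal_density (b * \<tau>\<^sup>2) \<tau> x) \<partial>lborel)"
  proof (intro nn_integral_cong)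
    fix x
    have "normal_density 0 \<sigma> x * exp (b * x + c * x\<^sup>2) = K * normal_density (b * \<tau>\<^sup>2) \<tau> x"
      using normal_tilt_pointwise[OF assms, where b=b and x=x] unfolding K_def q_def \<tau>_def by simp
    then show "ennreal (normal_density 0 \<sigma> x) * ennreal (exp (b * x + c * x\<^sup>2)) = ennreal K * ennreal (normal_density (b * \<tau>\<^sup>2) \<tau> x)"
      using K by (simp add: ennreal_mult'[symmetric])
  qed
  also have "\<dots> = ennreal K * (\<integral>\<^sup>+x. ennreal (normal_density (b * \<tau>\<^sup>2) \<tau> x) \<partial>lborel)"
    by (rule nn_integral_cmult) auto
  also have "(\<integral>\<^sup>+x. ennreal (normal_density (b * \<tau>\<^sup>2) \<tau> x) \<partial>lborel) = 1"
  proof -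
    have "\<tau> > 0" using q assms unfolding \<tau>_def by simp
    then show ?thesis by (subst nn_integral_eq_integral) (auto intro: integrable_normal_density)
  qed
  finally show ?thesis by (simp add: K_def q_def)
qed


abbreviation NN :: "real \<Rightarrow> real measure" where
  "NN \<sigma> \<equiv> density lborel (normal_density 0 \<sigma>)"

lemma prob_NN: "\<sigma> > 0 \<Longrightarrow> prob_space (NN \<sigma>)"
  by (rule prob_space_normal_density)

lemma product_prob_NN: "\<sigma> > 0 \<Longrightarrow> product_prob_space (\<lambda>_. NN \<sigma>)"
  by (simp add: product_prob_space_def product_sigma_finite_def prob_NN
      prob_space_imp_sigma_finite product_prob_space_axioms_def)

lemma prod_const_exp: "(\<Prod>i<m. (K::real) * exp (g i)) = K ^ m * exp (\<Sum>i<m. g i)"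
  by (simp add: prod.distrib exp_sum)

lemma prod_gauss_mgf:
  fixes \<sigma> c :: real and b :: "nat \<Rightarrow> real" and m :: nat
  assumes "\<sigma> > 0" "2 * c * \<sigma>\<^sup>2 < 1"
  shows "(\<integral>\<^sup>+n. ennreal (exp (\<Sum>i<m. b i * n i + c * (n i)\<^sup>2)) \<partial>PiM {..<m} (\<lambda>_. NN \<sigma>)) =
    ennreal ((1 / sqrt (1 - 2 * c * \<sigma>\<^sup>2)) ^ m * exp (\<Sum>i<m. (b i)\<^sup>2 * \<sigma>\<^sup>2 / (2 * (1 - 2 * c * \<sigma>\<^sup>2))))"
proof -
  interpret product_prob_space "\<lambda>_. NN \<sigma>" using product_prob_NN[OF assms(1)] .
  have "(\<integral>\<^sup>+n. ennreal (exp (\<Sum>i<m. b i * n i + c * (n i)\<^sup>2)) \<partial>PiM {..<m} (\<lambda>_. NN \<sigma>)) =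
     (\<integral>\<^sup>+n. (\<Prod>i<m. ennreal (exp (b i * n i + c * (n i)\<^sup>2))) \<partial>PiM {..<m} (\<lambda>_. NN \<sigma>))"
    by (simp add: exp_sum prod_ennreal)
  also have "\<dots> = (\<Prod>i<m. (\<integral>\<^sup>+x. ennreal (exp (b i * x + c * x\<^sup>2)) \<partial>NN \<sigma>))"
    by (rule product_nn_integral_prod) auto
  also have "\<dots> = (\<Prod>i<m. ennreal (1 / sqrt (1 - 2 * c * \<sigma>\<^sup>2) * exp ((b i)\<^sup>2 * \<sigma>\<^sup>2 / (2 * (1 - 2 * c * \<sigma>\<^sup>2)))))"
    using normal_mgf_tilt[OF assms] by simp
  also have "\<dots> = ennreal ((1 / sqrt (1 - 2 * c * \<sigma>\<^sup>2)) ^ m * exp (\<Sum>i<m. (b i)\<^sup>2 * \<sigma>\<^sup>2 / (2 * (1 - 2 * c * \<sigma>\<^sup>2))))"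
  proof -
    have q: "1 - 2 * c * \<sigma>\<^sup>2 > 0" using assms by simp
    have "(\<Prod>i<m. ennreal (1 / sqrt (1 - 2 * c * \<sigma>\<^sup>2) * exp ((b i)\<^sup>2 * \<sigma>\<^sup>2 / (2 * (1 - 2 * c * \<sigma>\<^sup>2)))))
       = ennreal (\<Prod>i<m. 1 / sqrt (1 - 2 * c * \<sigma>\<^sup>2) * exp ((b i)\<^sup>2 * \<sigma>\<^sup>2 / (2 * (1 - 2 * c * \<sigma>\<^sup>2))))"
      by (rule prod_ennreal) (use q in simp)
    also have "(\<Prod>i<m. 1 / sqrt (1 - 2 * c * \<sigma>\<^sup>2) * exp ((b i)\<^sup>2 * \<sigma>\<^sup>2 / (2 * (1 - 2 * c * \<sigma>\<^sup>2))))
       = (1 / sqrt (1 - 2 * c * \<sigma>\<^sup>2)) ^ m * exp (\<Sum>i<m. (b i)\<^sup>2 * \<sigma>\<^sup>2 / (2 * (1 - 2 * c * \<sigma>\<^sup>2)))"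
      by (rule prod_const_exp)
    finally show ?thesis .
  qed
  finally show ?thesis .
qed


definition ip :: "nat \<Rightarrow> (nat \<Rightarrow> real) \<Rightarrow> (nat \<Rightarrow> real) \<Rightarrow> real" where
  "ip D v w = (\<Sum>i<D. v i * w i)"

definition orthonormal :: "nat \<Rightarrow> nat \<Rightarrow> (nat \<Rightarrow> nat \<Rightarrow> real) \<Rightarrow> bool" where
  "orthonormal D k u \<longleftrightarrow> (\<forall>j<k. \<forall>l<k. ip D (u j) (u l) = (if j = l then 1 else 0))"

lemma orth_sum_sq:
  assumes "orthonormal D k u"
  shows "(\<Sum>i<D. (\<Sum>j<k. g j * u j i)\<^sup>2) = (\<Sum>j<k. (g j)\<^sup>2)"
proof -
  have "(\<Sum>i<D. (\<Sum>j<k. g j * u j i)\<^sup>2) = (\<Sum>i<D. \<Sum>j<k. \<Sum>l<k. g j * g l * (u j i * u l i))"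
    by (simp add: power2_eq_square sum_product algebra_simps)
  also have "\<dots> = (\<Sum>j<k. \<Sum>l<k. g j * g l * ip D (u j) (u l))"
    unfolding ip_def by (simp add: sum_distrib_left sum.swap[of _ "{..<D}"])
  also have "\<dots> = (\<Sum>j<k. \<Sum>l<k. if l = j then g j * g j else 0)"
    using assms unfolding orthonormal_def by (intro sum.cong refl) auto
  also have "\<dots> = (\<Sum>j<k. (g j)\<^sup>2)"
    by (simp add: power2_eq_square)
  finally show ?thesis .
qed

lemma HS_identity:
  fixes t :: real and w :: "nat \<Rightarrow> real"
  assumes "t \<ge> 0"
  shows "ennreal (exp (t * (\<Sum>j<k. (w j)\<^sup>2))) =
    (\<integral>\<^sup>+g. ennreal (exp (\<Sum>j<k. (sqrt (2 * t) * w j) * g j + 0 * (g j)\<^sup>2)) \<partial>PiM {..<k} (\<lambda>_. NN 1))"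
proof -
  have "(\<integral>\<^sup>+g. ennreal (exp (\<Sum>j<k. (sqrt (2 * t) * w j) * g j + 0 * (g j)\<^sup>2)) \<partial>PiM {..<k} (\<lambda>_. NN 1))
     = ennreal ((1 / sqrt (1 - 2 * 0 * 1\<^sup>2)) ^ k * exp (\<Sum>j<k. (sqrt (2 * t) * w j)\<^sup>2 * 1\<^sup>2 / (2 * (1 - 2 * 0 * 1\<^sup>2))))"
    by (rule prod_gauss_mgf) auto
  also have "\<dots> = ennreal (exp (t * (\<Sum>j<k. (w j)\<^sup>2)))"
    using assms by (simp add: power_mult_distrib sum_distrib_left)
  finally show ?thesis by simp
qed

lemma upper_mgf:
  fixes \<sigma> t :: real and \<alpha> :: "nat \<Rightarrow> real"
  assumes \<sigma>: "\<sigma> > 0" and t: "t \<ge> 0" "2 * t * \<sigma>\<^sup>2 < 1" and u: "orthonormal D k u"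
  shows "(\<integral>\<^sup>+n. ennreal (exp (t * (\<Sum>j<k. (\<alpha> j + ip D (u j) n)\<^sup>2))) \<partial>PiM {..<D} (\<lambda>_. NN \<sigma>)) =
    ennreal ((1 / sqrt (1 - 2 * t * \<sigma>\<^sup>2)) ^ k * exp (t * (\<Sum>j<k. (\<alpha> j)\<^sup>2) / (1 - 2 * t * \<sigma>\<^sup>2)))"
proof -
  define G where "G = PiM {..<D} (\<lambda>_. NN \<sigma>)"
  define H where "H = PiM {..<k} (\<lambda>_. NN 1)"
  define r where "r = sqrt (2 * t)"
  have r2: "r\<^sup>2 = 2 * t" using t unfolding r_def by simp
  interpret G: prob_space G unfolding G_def
    by (intro prob_space_PiM prob_NN \<sigma>)
  interpret H: prob_space H unfolding H_def
    by (intro prob_space_PiM prob_NN) simp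
  interpret GH: pair_sigma_finite G H
    by (simp add: pair_sigma_finite_def G.sigma_finite_measure_axioms H.sigma_finite_measure_axioms)
  define F where "F = (\<lambda>(n::nat\<Rightarrow>real) (g::nat\<Rightarrow>real).
       ennreal (exp (\<Sum>j<k. (r * (\<alpha> j + (\<Sum>i<D. u j i * n i))) * g j + 0 * (g j)\<^sup>2)))"
  have Fm: "(\<lambda>(n, g). F n g) \<in> borel_measurable (G \<Otimes>\<^sub>M H)"
    unfolding F_def G_def H_def by measurable
  have "(\<integral>\<^sup>+n. ennreal (exp (t * (\<Sum>j<k. (\<alpha> j + ip D (u j) n)\<^sup>2))) \<partial>G) =
     (\<integral>\<^sup>+n. (\<integral>\<^sup>+g. F n g \<partial>H) \<partial>G)"
    unfolding F_def H_def r_def ip_def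
    by (intro nn_integral_cong) (simp add: HS_identity[OF t(1)])
  also have "\<dots> = (\<integral>\<^sup>+g. (\<integral>\<^sup>+n. F n g \<partial>G) \<partial>H)"
    by (rule GH.Fubini'[OF Fm, symmetric])
  also have "\<dots> = (\<integral>\<^sup>+g. ennreal (exp (\<Sum>j<k. (r * \<alpha> j) * g j + (t * \<sigma>\<^sup>2) * (g j)\<^sup>2)) \<partial>H)"
  proof (intro nn_integral_cong)
    fix g :: "nat \<Rightarrow> real"
    define s where "s = (\<lambda>i. r * (\<Sum>j<k. g j * u j i))"
    have split: "(\<Sum>j<k. (r * (\<alpha> j + (\<Sum>i<D. u j i * n i))) * g j + 0 * (g j)\<^sup>2)
        = (\<Sum>j<k. r * \<alpha> j * g j) + (\<Sum>i<D. s i * n i + 0 * (n i)\<^sup>2)" for n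
      unfolding s_def
      by (simp add: algebra_simps sum.distrib sum_distrib_left sum_distrib_right sum.swap[of _ "{..<D}"])
    have ss: "(\<Sum>i<D. (s i)\<^sup>2 * \<sigma>\<^sup>2 / (2 * (1 - 2 * 0 * \<sigma>\<^sup>2))) = t * \<sigma>\<^sup>2 * (\<Sum>j<k. (g j)\<^sup>2)"
    proof -
      have "(\<Sum>i<D. (s i)\<^sup>2 * \<sigma>\<^sup>2 / (2 * (1 - 2 * 0 * \<sigma>\<^sup>2))) = r\<^sup>2 * \<sigma>\<^sup>2 / 2 * (\<Sum>i<D. (\<Sum>j<k. g j * u j i)\<^sup>2)"
      proof -
        have "\<And>i. (s i)\<^sup>2 * \<sigma>\<^sup>2 / (2 * (1 - 2 * 0 * \<sigma>\<^sup>2)) = r\<^sup>2 * \<sigma>\<^sup>2 / 2 * (\<Sum>j<k. g j * u j i)\<^sup>2"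
          unfolding s_def by (simp add: power_mult_distrib)
        then have "(\<Sum>i<D. (s i)\<^sup>2 * \<sigma>\<^sup>2 / (2 * (1 - 2 * 0 * \<sigma>\<^sup>2))) = (\<Sum>i<D. r\<^sup>2 * \<sigma>\<^sup>2 / 2 * (\<Sum>j<k. g j * u j i)\<^sup>2)"
          by (intro sum.cong) auto
        then show ?thesis by (simp only: sum_distrib_left)
      qed
      also have "\<dots> = t * \<sigma>\<^sup>2 * (\<Sum>j<k. (g j)\<^sup>2)"
        unfolding orth_sum_sq[OF u] r2 by simp
      finally show ?thesis .
    qed
    have "(\<integral>\<^sup>+n. F n g \<partial>G) = (\<integral>\<^sup>+n. ennreal (exp (\<Sum>j<k. r * \<alpha> j * g j)) *
          ennreal (exp (\<Sum>i<D. s i * n i + 0 * (n i)\<^sup>2)) \<partial>G)"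
      unfolding F_def split exp_add by (simp add: ennreal_mult')
    also have "\<dots> = ennreal (exp (\<Sum>j<k. r * \<alpha> j * g j)) *
          (\<integral>\<^sup>+n. ennreal (exp (\<Sum>i<D. s i * n i + 0 * (n i)\<^sup>2)) \<partial>G)"
      by (rule nn_integral_cmult) (simp add: G_def)
    also have "(\<integral>\<^sup>+n. ennreal (exp (\<Sum>i<D. s i * n i + 0 * (n i)\<^sup>2)) \<partial>G) =
        ennreal ((1 / sqrt (1 - 2 * 0 * \<sigma>\<^sup>2)) ^ D * exp (\<Sum>i<D. (s i)\<^sup>2 * \<sigma>\<^sup>2 / (2 * (1 - 2 * 0 * \<sigma>\<^sup>2))))"
      unfolding G_def by (rule prod_gauss_mgf) (use \<sigma> in auto)
    finally show "(\<integral>\<^sup>+n. F n g \<partial>G) = ennreal (exp (\<Sum>j<k. (r * \<alpha> j) * g j + (t * \<sigma>\<^sup>2) * (g j)\<^sup>2))"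
      unfolding ss by (simp add: ennreal_mult'[symmetric] exp_add[symmetric] sum.distrib sum_distrib_left)
  qed
  also have "\<dots> = ennreal ((1 / sqrt (1 - 2 * (t * \<sigma>\<^sup>2) * 1\<^sup>2)) ^ k *
      exp (\<Sum>j<k. (r * \<alpha> j)\<^sup>2 * 1\<^sup>2 / (2 * (1 - 2 * (t * \<sigma>\<^sup>2) * 1\<^sup>2))))"
    unfolding H_def by (rule prod_gauss_mgf) (use t in auto)
  also have "\<dots> = ennreal ((1 / sqrt (1 - 2 * t * \<sigma>\<^sup>2)) ^ k * exp (t * (\<Sum>j<k. (\<alpha> j)\<^sup>2) / (1 - 2 * t * \<sigma>\<^sup>2)))"
  proof -
    have q: "1 - 2 * t * \<sigma>\<^sup>2 > 0" using t by simp
    have "\<And>j. (r * \<alpha> j)\<^sup>2 * 1\<^sup>2 / (2 * (1 - 2 * (t * \<sigma>\<^sup>2) * 1\<^sup>2)) = t * (\<alpha> j)\<^sup>2 / (1 - 2 * t * \<sigma>\<^sup>2)"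
      using q by (simp add: power_mult_distrib r2 field_simps)
    then show ?thesis by (simp add: sum_divide_distrib sum_distrib_left mult.assoc)
  qed
  finally show ?thesis unfolding G_def .
qed


lemma lower_mgf:
  fixes \<sigma> t :: real and xt :: "nat \<Rightarrow> real"
  assumes \<sigma>: "\<sigma> > 0" and t: "t \<ge> 0" and e: "orthonormal D d e" and dD: "d \<le> D"
    and xe: "\<And>j. j < d \<Longrightarrow> ip D (e j) xt = 0"
  shows "(\<integral>\<^sup>+n. ennreal (exp (- t * ((\<Sum>i<D. (xt i + n i)\<^sup>2) - (\<Sum>j<d. (ip D (e j) n)\<^sup>2)))) \<partial>PiM {..<D} (\<lambda>_. NN \<sigma>)) =
    ennreal ((1 / sqrt (1 + 2 * t * \<sigma>\<^sup>2)) ^ (D - d) * exp (- t * (\<Sum>i<D. (xt i)\<^sup>2) / (1 + 2 * t * \<sigma>\<^sup>2)))"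
proof -
  define G where "G = PiM {..<D} (\<lambda>_. NN \<sigma>)"
  define H where "H = PiM {..<d} (\<lambda>_. NN 1)"
  define r where "r = sqrt (2 * t)"
  define q where "q = 1 + 2 * t * \<sigma>\<^sup>2"
  define A where "A = (\<Sum>i<D. (xt i)\<^sup>2)"
  have "0 \<le> t * \<sigma>\<^sup>2" using t by simp
  then have q: "q > 0" "q \<ge> 1" unfolding q_def by auto
  have r2: "r\<^sup>2 = 2 * t" using t unfolding r_def by simp
  interpret G: prob_space G unfolding G_def
    by (intro prob_space_PiM prob_NN \<sigma>)
  interpret H: prob_space H unfolding H_def
    by (intro prob_space_PiM prob_NN) simp
  interpret GH: pair_sigma_finite G H
    by (simp add: pair_sigma_finite_def G.sigma_finite_measure_axioms H.sigma_finite_measure_axioms)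
  define F where "F = (\<lambda>(n::nat\<Rightarrow>real) (g::nat\<Rightarrow>real).
       ennreal (exp (- t * (\<Sum>i<D. (xt i + n i)\<^sup>2) +
          (\<Sum>j<d. (r * (\<Sum>i<D. e j i * n i)) * g j + 0 * (g j)\<^sup>2))))"
  have Fm: "(\<lambda>(n, g). F n g) \<in> borel_measurable (G \<Otimes>\<^sub>M H)"
    unfolding F_def G_def H_def by measurable
  have "(\<integral>\<^sup>+n. ennreal (exp (- t * ((\<Sum>i<D. (xt i + n i)\<^sup>2) - (\<Sum>j<d. (ip D (e j) n)\<^sup>2)))) \<partial>G) =
     (\<integral>\<^sup>+n. (\<integral>\<^sup>+g. F n g \<partial>H) \<partial>G)"
  proof (intro nn_integral_cong)
    fix n :: "nat \<Rightarrow> real"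
    have "ennreal (exp (- t * ((\<Sum>i<D. (xt i + n i)\<^sup>2) - (\<Sum>j<d. (ip D (e j) n)\<^sup>2)))) =
      ennreal (exp (- t * (\<Sum>i<D. (xt i + n i)\<^sup>2))) * ennreal (exp (t * (\<Sum>j<d. (ip D (e j) n)\<^sup>2)))"
      by (simp add: ennreal_mult'[symmetric] exp_add[symmetric] algebra_simps)
    also have "\<dots> = ennreal (exp (- t * (\<Sum>i<D. (xt i + n i)\<^sup>2))) *
       (\<integral>\<^sup>+g. ennreal (exp (\<Sum>j<d. (r * ip D (e j) n) * g j + 0 * (g j)\<^sup>2)) \<partial>H)"
      unfolding H_def r_def HS_identity[OF t] ..
    also have "\<dots> = (\<integral>\<^sup>+g. ennreal (exp (- t * (\<Sum>i<D. (xt i + n i)\<^sup>2))) * 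
        ennreal (exp (\<Sum>j<d. (r * ip D (e j) n) * g j + 0 * (g j)\<^sup>2)) \<partial>H)"
      by (rule nn_integral_cmult[symmetric]) (simp add: H_def)
    also have "\<dots> = (\<integral>\<^sup>+g. F n g \<partial>H)"
      unfolding F_def ip_def by (simp add: ennreal_mult'[symmetric] exp_add[symmetric])
    finally show "ennreal (exp (- t * ((\<Sum>i<D. (xt i + n i)\<^sup>2) - (\<Sum>j<d. (ip D (e j) n)\<^sup>2)))) = (\<integral>\<^sup>+g. F n g \<partial>H)" .
  qed
  also have "\<dots> = (\<integral>\<^sup>+g. (\<integral>\<^sup>+n. F n g \<partial>G) \<partial>H)"
    by (rule GH.Fubini'[OF Fm, symmetric])
  also have "\<dots> = (\<integral>\<^sup>+g. ennreal ((1 / sqrt q) ^ D * exp (- t * A / q)) *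
        ennreal (exp (\<Sum>j<d. 0 * g j + (t * \<sigma>\<^sup>2 / q) * (g j)\<^sup>2)) \<partial>H)"
  proof (intro nn_integral_cong)
    fix g :: "nat \<Rightarrow> real"
    define s where "s = (\<lambda>i. r * (\<Sum>j<d. g j * e j i))"
    have split: "- t * (\<Sum>i<D. (xt i + n i)\<^sup>2) + (\<Sum>j<d. (r * (\<Sum>i<D. e j i * n i)) * g j + 0 * (g j)\<^sup>2)
        = - t * A + (\<Sum>i<D. (s i - 2 * t * xt i) * n i + (- t) * (n i)\<^sup>2)" for n
    proof -
      have "(\<Sum>j<d. (r * (\<Sum>i<D. e j i * n i)) * g j + 0 * (g j)\<^sup>2) = (\<Sum>i<D. s i * n i)"
        unfolding s_def
        by (simp add: algebra_simps sum_distrib_left sum_distrib_right sum.swap[of _ "{..<D}"])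
      moreover have "- t * (\<Sum>i<D. (xt i + n i)\<^sup>2) = - t * A + (\<Sum>i<D. (- 2 * t * xt i) * n i + (- t) * (n i)\<^sup>2)"
      proof -
        have "- t * (\<Sum>i<D. (xt i + n i)\<^sup>2) = (\<Sum>i<D. - t * (xt i + n i)\<^sup>2)"
          by (simp add: sum_distrib_left)
        also have "\<dots> = (\<Sum>i<D. - t * (xt i)\<^sup>2 + ((- 2 * t * xt i) * n i + (- t) * (n i)\<^sup>2))"
          by (intro sum.cong) (auto simp: power2_eq_square algebra_simps)
        also have "\<dots> = - t * A + (\<Sum>i<D. (- 2 * t * xt i) * n i + (- t) * (n i)\<^sup>2)"
          unfolding A_def sum.distrib by (simp add: sum_distrib_left)
        finally show ?thesis .
      qed
      moreover have "(\<Sum>i<D. (s i - 2 * t * xt i) * n i + (- t) * (n i)\<^sup>2) = (\<Sum>i<D. s i * n i) + (\<Sum>i<D. (- 2 * t * xt i) * n i + (- t) * (n i)\<^sup>2)"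
        by (simp add: sum.distrib[symmetric] algebra_simps)
      ultimately show ?thesis by linarith
    qed
    have sx: "(\<Sum>i<D. s i * xt i) = 0"
    proof -
      have "(\<Sum>i<D. s i * xt i) = r * (\<Sum>j<d. g j * ip D (e j) xt)"
        unfolding s_def ip_def
        by (simp add: algebra_simps sum_distrib_left sum_distrib_right sum.swap[of _ "{..<D}"])
      also have "\<dots> = 0" using xe by simp
      finally show ?thesis .
    qed
    have ss: "(\<Sum>i<D. (s i)\<^sup>2) = 2 * t * (\<Sum>j<d. (g j)\<^sup>2)"
    proof -
      have "(\<Sum>i<D. (s i)\<^sup>2) = (\<Sum>i<D. r\<^sup>2 * (\<Sum>j<d. g j * e j i)\<^sup>2)"
        unfolding s_def by (simp add: power_mult_distrib)
      also have "\<dots> = r\<^sup>2 * (\<Sum>j<d. (g j)\<^sup>2)"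
        by (simp only: sum_distrib_left[symmetric] orth_sum_sq[OF e])
      finally show ?thesis by (simp add: r2)
    qed
    have expo: "(\<Sum>i<D. (s i - 2 * t * xt i)\<^sup>2 * \<sigma>\<^sup>2 / (2 * q))
       = (t * \<sigma>\<^sup>2 / q) * (\<Sum>j<d. (g j)\<^sup>2) + 2 * t\<^sup>2 * \<sigma>\<^sup>2 * A / q"
    proof -
      have "(\<Sum>i<D. (s i - 2 * t * xt i)\<^sup>2) = (\<Sum>i<D. (s i)\<^sup>2) - 4 * t * (\<Sum>i<D. s i * xt i) + 4 * t\<^sup>2 * A"
        unfolding A_def by (simp add: power2_eq_square algebra_simps sum.distrib sum_subtractf sum_distrib_left)
      then have "(\<Sum>i<D. (s i - 2 * t * xt i)\<^sup>2) = 2 * t * (\<Sum>j<d. (g j)\<^sup>2) + 4 * t\<^sup>2 * A"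
        using sx ss by simp
      moreover have "(\<Sum>i<D. (s i - 2 * t * xt i)\<^sup>2 * \<sigma>\<^sup>2 / (2 * q))
          = (\<Sum>i<D. (s i - 2 * t * xt i)\<^sup>2) * \<sigma>\<^sup>2 / (2 * q)"
        by (simp add: sum_divide_distrib sum_distrib_right)
      ultimately show ?thesis using q by (simp add: field_simps power2_eq_square)
    qed
    have "(\<integral>\<^sup>+n. F n g \<partial>G) = (\<integral>\<^sup>+n. ennreal (exp (- t * A)) *
          ennreal (exp (\<Sum>i<D. (s i - 2 * t * xt i) * n i + (- t) * (n i)\<^sup>2)) \<partial>G)"
      unfolding F_def by (simp only: split exp_add ennreal_mult' exp_ge_zero)
    also have "\<dots> = ennreal (exp (- t * A)) *
          (\<integral>\<^sup>+n. ennreal (exp (\<Sum>i<D. (s i - 2 * t * xt i) * n i + (- t) * (n i)\<^sup>2)) \<partial>G)"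
      by (rule nn_integral_cmult) (simp add: G_def)
    also have "(\<integral>\<^sup>+n. ennreal (exp (\<Sum>i<D. (s i - 2 * t * xt i) * n i + (- t) * (n i)\<^sup>2)) \<partial>G) =
        ennreal ((1 / sqrt (1 - 2 * (- t) * \<sigma>\<^sup>2)) ^ D * exp (\<Sum>i<D. (s i - 2 * t * xt i)\<^sup>2 * \<sigma>\<^sup>2 / (2 * (1 - 2 * (- t) * \<sigma>\<^sup>2))))"
      unfolding G_def by (rule prod_gauss_mgf) (use \<sigma> q in \<open>auto simp: q_def\<close>)
    also have "(1 - 2 * (- t) * \<sigma>\<^sup>2) = q" unfolding q_def by simp
    finally have "(\<integral>\<^sup>+n. F n g \<partial>G) = ennreal (exp (- t * A)) * ennreal ((1 / sqrt q) ^ D *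
        exp ((t * \<sigma>\<^sup>2 / q) * (\<Sum>j<d. (g j)\<^sup>2) + 2 * t\<^sup>2 * \<sigma>\<^sup>2 * A / q))"
      unfolding expo .
    also have "\<dots> = ennreal ((1 / sqrt q) ^ D * exp (- t * A / q)) *
        ennreal (exp (\<Sum>j<d. 0 * g j + (t * \<sigma>\<^sup>2 / q) * (g j)\<^sup>2))"
    proof -
      have "- t * A + 2 * t\<^sup>2 * \<sigma>\<^sup>2 * A / q = - t * A / q"
        using q unfolding q_def by (simp add: field_simps power2_eq_square)
      then have "exp (- t * A) * exp ((t * \<sigma>\<^sup>2 / q) * (\<Sum>j<d. (g j)\<^sup>2) + 2 * t\<^sup>2 * \<sigma>\<^sup>2 * A / q)
          = exp (- t * A / q) * exp (\<Sum>j<d. 0 * g j + (t * \<sigma>\<^sup>2 / q) * (g j)\<^sup>2)"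
        by (simp add: exp_add[symmetric] sum_distrib_left algebra_simps)
      then show ?thesis using q by (simp add: ennreal_mult'[symmetric] algebra_simps)
    qed
    finally show "(\<integral>\<^sup>+n. F n g \<partial>G) = ennreal ((1 / sqrt q) ^ D * exp (- t * A / q)) *
        ennreal (exp (\<Sum>j<d. 0 * g j + (t * \<sigma>\<^sup>2 / q) * (g j)\<^sup>2))" .
  qed
  also have "\<dots> = ennreal ((1 / sqrt q) ^ D * exp (- t * A / q)) *
      (\<integral>\<^sup>+g. ennreal (exp (\<Sum>j<d. 0 * g j + (t * \<sigma>\<^sup>2 / q) * (g j)\<^sup>2)) \<partial>H)"
    by (rule nn_integral_cmult) (simp add: H_def)
  also have "(\<integral>\<^sup>+g. ennreal (exp (\<Sum>j<d. 0 * g j + (t * \<sigma>\<^sup>2 / q) * (g j)\<^sup>2)) \<partial>H) =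
      ennreal ((1 / sqrt (1 - 2 * (t * \<sigma>\<^sup>2 / q) * 1\<^sup>2)) ^ d * exp (\<Sum>j<d. 0\<^sup>2 * 1\<^sup>2 / (2 * (1 - 2 * (t * \<sigma>\<^sup>2 / q) * 1\<^sup>2))))"
    unfolding H_def by (rule prod_gauss_mgf) (use q in \<open>auto simp: q_def field_simps\<close>)
  also have "1 - 2 * (t * \<sigma>\<^sup>2 / q) * 1\<^sup>2 = 1 / q"
    using q unfolding q_def by (simp add: field_simps)
  finally have "(\<integral>\<^sup>+n. ennreal (exp (- t * ((\<Sum>i<D. (xt i + n i)\<^sup>2) - (\<Sum>j<d. (ip D (e j) n)\<^sup>2)))) \<partial>G) =
      ennreal ((1 / sqrt q) ^ D * exp (- t * A / q)) * ennreal ((1 / sqrt (1 / q)) ^ d)"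
    by simp
  also have "\<dots> = ennreal ((1 / sqrt q) ^ (D - d) * exp (- t * A / q))"
  proof -
    have "(1 / sqrt q) ^ D * (1 / sqrt (1 / q)) ^ d = (1 / sqrt q) ^ (D - d)"
    proof -
      have "D = (D - d) + d" using dD by simp
      then have "(1 / sqrt q) ^ D = (1 / sqrt q) ^ (D - d) * (1 / sqrt q) ^ d"
        by (metis power_add)
      moreover have "(1 / sqrt q) ^ d * (1 / sqrt (1 / q)) ^ d = 1"
        using q by (simp add: real_sqrt_divide power_mult_distrib[symmetric])
      ultimately show ?thesis by (simp add: algebra_simps)
    qed
    then show ?thesis using q by (simp add: ennreal_mult'[symmetric] algebra_simps)
  qed
  finally show ?thesis unfolding G_def q_def A_def .
qed


lemma pow_inv_sqrt_exp:
  fixes x :: real assumes "x > 0"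
  shows "(1 / sqrt x) ^ k = exp (- (real k / 2) * ln x)"
proof -
  have "sqrt x = exp (ln x / 2)"
    using assms by (simp add: powr_half_sqrt[symmetric] powr_def)
  then have "1 / sqrt x = exp (- (ln x / 2))" by (simp add: exp_minus field_simps)
  then have "(1 / sqrt x) ^ k = exp (real k * (- (ln x / 2)))"
    by (simp add: exp_of_nat_mult[symmetric])
  then show ?thesis by (simp add: algebra_simps)
qed

lemma upper_alg:
  fixes \<epsilon> k a :: real
  assumes "0 < \<epsilon>" "\<epsilon> < 1" "k \<ge> 0" "a \<ge> 0"
  shows "- (\<epsilon> / 4) * (1 + 2 * \<epsilon>) * (k + a) - (k / 2) * ln (1 - \<epsilon> / 2) + (\<epsilon> / 4) * a / (1 - \<epsilon> / 2)
     \<le> - \<epsilon>\<^sup>2 * k / 4"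
proof -
  have L: "- (\<epsilon> / 2) - 2 * (\<epsilon> / 2)\<^sup>2 \<le> ln (1 - \<epsilon> / 2)"
    by (rule ln_one_minus_pos_lower_bound) (use assms in auto)
  have 1: "- (k / 2) * ln (1 - \<epsilon> / 2) \<le> (k / 2) * (\<epsilon> / 2 + 2 * (\<epsilon> / 2)\<^sup>2)"
    using mult_left_mono[OF L, of "k / 2"] assms by (simp add: algebra_simps)
  have "1 / (1 - \<epsilon> / 2) \<le> 1 + \<epsilon>"
    using assms by (simp add: field_simps)
  then have 2: "(\<epsilon> / 4) * a / (1 - \<epsilon> / 2) \<le> (\<epsilon> / 4) * a * (1 + \<epsilon>)"
    using assms mult_left_mono[of "1 / (1 - \<epsilon> / 2)" "1 + \<epsilon>" "(\<epsilon> / 4) * a"] by simp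
  have 3: "0 \<le> \<epsilon>\<^sup>2 * a" using assms by simp
  have "- (\<epsilon> / 4) * (1 + 2 * \<epsilon>) * (k + a) - (k / 2) * ln (1 - \<epsilon> / 2) + (\<epsilon> / 4) * a / (1 - \<epsilon> / 2)
     \<le> - (\<epsilon> / 4) * (1 + 2 * \<epsilon>) * (k + a) + (k / 2) * (\<epsilon> / 2 + 2 * (\<epsilon> / 2)\<^sup>2) + (\<epsilon> / 4) * a * (1 + \<epsilon>)"
    using 1 2 by linarith
  also have "\<dots> = - \<epsilon>\<^sup>2 * k / 4 - \<epsilon>\<^sup>2 * a / 4"
    by (simp add: field_simps power2_eq_square)
  also have "\<dots> \<le> - \<epsilon>\<^sup>2 * k / 4" using 3 by simp
  finally show ?thesis .
qed

lemma lower_alg: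
  fixes \<epsilon> k a :: real
  assumes "0 < \<epsilon>" "\<epsilon> < 1" "k \<ge> 0" "a \<ge> 0"
  shows "(\<epsilon> / 4) * (1 - \<epsilon>) * (k + a) - (k / 2) * ln (1 + \<epsilon> / 2) - (\<epsilon> / 4) * a / (1 + \<epsilon> / 2)
     \<le> - \<epsilon>\<^sup>2 * k / 8"
proof -
  have L: "\<epsilon> / 2 - (\<epsilon> / 2)\<^sup>2 \<le> ln (1 + \<epsilon> / 2)"
    by (rule ln_one_plus_pos_lower_bound) (use assms in auto)
  have 1: "- (k / 2) * ln (1 + \<epsilon> / 2) \<le> - (k / 2) * (\<epsilon> / 2 - (\<epsilon> / 2)\<^sup>2)"
    using mult_left_mono[OF L, of "k / 2"] assms by (simp add: algebra_simps)
  have "1 - \<epsilon> / 2 \<le> 1 / (1 + \<epsilon> / 2)"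
    using assms by (simp add: field_simps)
  then have 2: "(\<epsilon> / 4) * a * (1 - \<epsilon> / 2) \<le> (\<epsilon> / 4) * a / (1 + \<epsilon> / 2)"
    using assms mult_left_mono[of "1 - \<epsilon> / 2" "1 / (1 + \<epsilon> / 2)" "(\<epsilon> / 4) * a"] by simp
  have 3: "0 \<le> \<epsilon>\<^sup>2 * a" using assms by simp
  have "(\<epsilon> / 4) * (1 - \<epsilon>) * (k + a) - (k / 2) * ln (1 + \<epsilon> / 2) - (\<epsilon> / 4) * a / (1 + \<epsilon> / 2)
     \<le> (\<epsilon> / 4) * (1 - \<epsilon>) * (k + a) - (k / 2) * (\<epsilon> / 2 - (\<epsilon> / 2)\<^sup>2) - (\<epsilon> / 4) * a * (1 - \<epsilon> / 2)"
    using 1 2 by linarith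
  also have "\<dots> = - \<epsilon>\<^sup>2 * k / 8 - \<epsilon>\<^sup>2 * a / 8"
    by (simp add: field_simps power2_eq_square)
  also have "\<dots> \<le> - \<epsilon>\<^sup>2 * k / 8" using 3 by simp
  finally show ?thesis .
qed


lemma upper_tail:
  fixes \<sigma> \<epsilon> :: real and \<alpha> :: "nat \<Rightarrow> real"
  assumes \<sigma>: "\<sigma> > 0" and \<epsilon>: "0 < \<epsilon>" "\<epsilon> < 1" and u: "orthonormal D k u"
  shows "measure (PiM {..<D} (\<lambda>_. NN \<sigma>)) {n \<in> space (PiM {..<D} (\<lambda>_. NN \<sigma>)).
      (1 + 2 * \<epsilon>) * (\<sigma>\<^sup>2 * real k + (\<Sum>j<k. (\<alpha> j)\<^sup>2)) \<le> (\<Sum>j<k. (\<alpha> j + ip D (u j) n)\<^sup>2)}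
    \<le> exp (- \<epsilon>\<^sup>2 * real k / 4)"
proof -
  define G where "G = PiM {..<D} (\<lambda>_. NN \<sigma>)"
  define A where "A = (\<Sum>j<k. (\<alpha> j)\<^sup>2)"
  define T where "T = (1 + 2 * \<epsilon>) * (\<sigma>\<^sup>2 * real k + A)"
  define Y where "Y = (\<lambda>n. (\<Sum>j<k. (\<alpha> j + ip D (u j) n)\<^sup>2))"
  define lam where "lam = \<epsilon> / (4 * \<sigma>\<^sup>2)"
  define E where "E = {n \<in> space G. T \<le> Y n}"
  have lam: "lam \<ge> 0" "2 * lam * \<sigma>\<^sup>2 = \<epsilon> / 2" using \<sigma> \<epsilon> unfolding lam_def by auto
  have A: "A \<ge> 0" unfolding A_def by (simp add: sum_nonneg)
  interpret G: prob_space G unfolding G_def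
    by (intro prob_space_PiM prob_NN \<sigma>)
  have Em: "E \<in> sets G"
    unfolding E_def Y_def ip_def G_def by measurable
  have "emeasure G E = (\<integral>\<^sup>+n. indicator E n \<partial>G)"
    using Em by simp
  also have "\<dots> \<le> (\<integral>\<^sup>+n. ennreal (exp (- lam * T)) * ennreal (exp (lam * Y n)) \<partial>G)"
  proof (rule nn_integral_mono)
    fix n
    show "indicator E n \<le> ennreal (exp (- lam * T)) * ennreal (exp (lam * Y n))"
    proof (cases "n \<in> E")
      case True
      then have "T \<le> Y n" unfolding E_def by simp
      then have "0 \<le> lam * (Y n - T)" using lam by simp
      then have "1 \<le> exp (lam * (Y n - T))" by simp
      also have "exp (lam * (Y n - T)) = exp (- lam * T) * exp (lam * Y n)"
        by (simp add: exp_add[symmetric] algebra_simps)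
      finally show ?thesis using True by (simp add: ennreal_mult'[symmetric])
    qed simp
  qed
  also have "\<dots> = ennreal (exp (- lam * T)) * (\<integral>\<^sup>+n. ennreal (exp (lam * Y n)) \<partial>G)"
    by (rule nn_integral_cmult) (simp add: G_def Y_def ip_def)
  also have "(\<integral>\<^sup>+n. ennreal (exp (lam * Y n)) \<partial>G) =
      ennreal ((1 / sqrt (1 - 2 * lam * \<sigma>\<^sup>2)) ^ k * exp (lam * A / (1 - 2 * lam * \<sigma>\<^sup>2)))"
    unfolding G_def Y_def A_def by (rule upper_mgf[OF \<sigma> lam(1) _ u]) (use lam \<epsilon> in simp)
  also have "ennreal (exp (- lam * T)) * ennreal ((1 / sqrt (1 - 2 * lam * \<sigma>\<^sup>2)) ^ k * exp (lam * A / (1 - 2 * lam * \<sigma>\<^sup>2)))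
      = ennreal (exp (- (\<epsilon> / 4) * (1 + 2 * \<epsilon>) * (real k + A / \<sigma>\<^sup>2) - (real k / 2) * ln (1 - \<epsilon> / 2)
           + (\<epsilon> / 4) * (A / \<sigma>\<^sup>2) / (1 - \<epsilon> / 2)))"
  proof -
    have "(1 / sqrt (1 - 2 * lam * \<sigma>\<^sup>2)) ^ k = exp (- (real k / 2) * ln (1 - \<epsilon> / 2))"
      unfolding lam(2) by (rule pow_inv_sqrt_exp) (use \<epsilon> in simp)
    moreover have "- lam * T = - (\<epsilon> / 4) * (1 + 2 * \<epsilon>) * (real k + A / \<sigma>\<^sup>2)"
      unfolding lam_def T_def using \<sigma> by (simp add: field_simps)
    moreover have "lam * A / (1 - 2 * lam * \<sigma>\<^sup>2) = (\<epsilon> / 4) * (A / \<sigma>\<^sup>2) / (1 - \<epsilon> / 2)"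
      unfolding lam(2) unfolding lam_def using \<sigma> by (simp add: field_simps)
    ultimately have "exp (- lam * T) * ((1 / sqrt (1 - 2 * lam * \<sigma>\<^sup>2)) ^ k * exp (lam * A / (1 - 2 * lam * \<sigma>\<^sup>2)))
       = exp (- (\<epsilon> / 4) * (1 + 2 * \<epsilon>) * (real k + A / \<sigma>\<^sup>2)) * (exp (- (real k / 2) * ln (1 - \<epsilon> / 2))
           * exp ((\<epsilon> / 4) * (A / \<sigma>\<^sup>2) / (1 - \<epsilon> / 2)))"
      by simp
    also have "\<dots> = exp (- (\<epsilon> / 4) * (1 + 2 * \<epsilon>) * (real k + A / \<sigma>\<^sup>2) + (- (real k / 2) * ln (1 - \<epsilon> / 2))
           + (\<epsilon> / 4) * (A / \<sigma>\<^sup>2) / (1 - \<epsilon> / 2))"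
      unfolding exp_add by (simp only: mult.assoc)
    also have "\<dots> = exp (- (\<epsilon> / 4) * (1 + 2 * \<epsilon>) * (real k + A / \<sigma>\<^sup>2) - (real k / 2) * ln (1 - \<epsilon> / 2)
           + (\<epsilon> / 4) * (A / \<sigma>\<^sup>2) / (1 - \<epsilon> / 2))"
      by (simp only: minus_mult_left[symmetric] diff_conv_add_uminus)
    finally show ?thesis by (simp add: ennreal_mult'[symmetric])
  qed
  also have "\<dots> \<le> ennreal (exp (- \<epsilon>\<^sup>2 * real k / 4))"
    using upper_alg[OF \<epsilon>, of "real k" "A / \<sigma>\<^sup>2"] A \<sigma> by (simp add: ennreal_leI)
  finally have "emeasure G E \<le> ennreal (exp (- \<epsilon>\<^sup>2 * real k / 4))" .
  then have "measure G E \<le> exp (- \<epsilon>\<^sup>2 * real k / 4)"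
    by (simp add: G.emeasure_eq_measure ennreal_le_iff)
  then show ?thesis unfolding G_def E_def T_def Y_def A_def by simp
qed


lemma lower_tail:
  fixes \<sigma> \<epsilon> :: real and xt :: "nat \<Rightarrow> real"
  assumes \<sigma>: "\<sigma> > 0" and \<epsilon>: "0 < \<epsilon>" "\<epsilon> < 1" and e: "orthonormal D d e" and dD: "d \<le> D"
    and xe: "\<And>j. j < d \<Longrightarrow> ip D (e j) xt = 0"
  shows "measure (PiM {..<D} (\<lambda>_. NN \<sigma>)) {n \<in> space (PiM {..<D} (\<lambda>_. NN \<sigma>)).
      (\<Sum>i<D. (xt i + n i)\<^sup>2) - (\<Sum>j<d. (ip D (e j) n)\<^sup>2) \<le> (1 - \<epsilon>) * (\<sigma>\<^sup>2 * real (D - d) + (\<Sum>i<D. (xt i)\<^sup>2))}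
    \<le> exp (- \<epsilon>\<^sup>2 * real (D - d) / 8)"
proof -
  define G where "G = PiM {..<D} (\<lambda>_. NN \<sigma>)"
  define A where "A = (\<Sum>i<D. (xt i)\<^sup>2)"
  define k where "k = D - d"
  define T where "T = (1 - \<epsilon>) * (\<sigma>\<^sup>2 * real k + A)"
  define Y where "Y = (\<lambda>n. (\<Sum>i<D. (xt i + n i)\<^sup>2) - (\<Sum>j<d. (ip D (e j) n)\<^sup>2))"
  define lam where "lam = \<epsilon> / (4 * \<sigma>\<^sup>2)"
  define E where "E = {n \<in> space G. Y n \<le> T}"
  have lam: "lam \<ge> 0" "2 * lam * \<sigma>\<^sup>2 = \<epsilon> / 2" using \<sigma> \<epsilon> unfolding lam_def by auto
  have A: "A \<ge> 0" unfolding A_def by (simp add: sum_nonneg)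
  interpret G: prob_space G unfolding G_def
    by (intro prob_space_PiM prob_NN \<sigma>)
  have Em: "E \<in> sets G"
    unfolding E_def Y_def ip_def G_def by measurable
  have "emeasure G E = (\<integral>\<^sup>+n. indicator E n \<partial>G)"
    using Em by simp
  also have "\<dots> \<le> (\<integral>\<^sup>+n. ennreal (exp (lam * T)) * ennreal (exp (- lam * Y n)) \<partial>G)"
  proof (rule nn_integral_mono)
    fix n
    show "indicator E n \<le> ennreal (exp (lam * T)) * ennreal (exp (- lam * Y n))"
    proof (cases "n \<in> E")
      case True
      then have "Y n \<le> T" unfolding E_def by simp
      then have "0 \<le> lam * (T - Y n)" using lam by simp
      then have "1 \<le> exp (lam * (T - Y n))" by simp
      also have "exp (lam * (T - Y n)) = exp (lam * T) * exp (- lam * Y n)"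
        by (simp add: exp_add[symmetric] algebra_simps)
      finally show ?thesis using True by (simp add: ennreal_mult'[symmetric])
    qed simp
  qed
  also have "\<dots> = ennreal (exp (lam * T)) * (\<integral>\<^sup>+n. ennreal (exp (- lam * Y n)) \<partial>G)"
    by (rule nn_integral_cmult) (simp add: G_def Y_def ip_def)
  also have "(\<integral>\<^sup>+n. ennreal (exp (- lam * Y n)) \<partial>G) =
      ennreal ((1 / sqrt (1 + 2 * lam * \<sigma>\<^sup>2)) ^ k * exp (- lam * A / (1 + 2 * lam * \<sigma>\<^sup>2)))"
    unfolding G_def Y_def A_def k_def by (rule lower_mgf[OF \<sigma> lam(1) e dD xe])
  also have "ennreal (exp (lam * T)) * ennreal ((1 / sqrt (1 + 2 * lam * \<sigma>\<^sup>2)) ^ k * exp (- lam * A / (1 + 2 * lam * \<sigma>\<^sup>2)))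
      = ennreal (exp ((\<epsilon> / 4) * (1 - \<epsilon>) * (real k + A / \<sigma>\<^sup>2) - (real k / 2) * ln (1 + \<epsilon> / 2)
           - (\<epsilon> / 4) * (A / \<sigma>\<^sup>2) / (1 + \<epsilon> / 2)))"
  proof -
    have "(1 / sqrt (1 + 2 * lam * \<sigma>\<^sup>2)) ^ k = exp (- (real k / 2) * ln (1 + \<epsilon> / 2))"
      unfolding lam(2) by (rule pow_inv_sqrt_exp) (use \<epsilon> in simp)
    moreover have "lam * T = (\<epsilon> / 4) * (1 - \<epsilon>) * (real k + A / \<sigma>\<^sup>2)"
      unfolding lam_def T_def using \<sigma> by (simp add: field_simps)
    moreover have "- lam * A / (1 + 2 * lam * \<sigma>\<^sup>2) = - ((\<epsilon> / 4) * (A / \<sigma>\<^sup>2) / (1 + \<epsilon> / 2))"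
      unfolding lam(2) unfolding lam_def using \<sigma> by (simp add: field_simps)
    ultimately have "exp (lam * T) * ((1 / sqrt (1 + 2 * lam * \<sigma>\<^sup>2)) ^ k * exp (- lam * A / (1 + 2 * lam * \<sigma>\<^sup>2)))
       = exp ((\<epsilon> / 4) * (1 - \<epsilon>) * (real k + A / \<sigma>\<^sup>2)) * (exp (- (real k / 2) * ln (1 + \<epsilon> / 2))
           * exp (- ((\<epsilon> / 4) * (A / \<sigma>\<^sup>2) / (1 + \<epsilon> / 2))))"
      by simp
    also have "\<dots> = exp ((\<epsilon> / 4) * (1 - \<epsilon>) * (real k + A / \<sigma>\<^sup>2) + (- (real k / 2) * ln (1 + \<epsilon> / 2))
           + (- ((\<epsilon> / 4) * (A / \<sigma>\<^sup>2) / (1 + \<epsilon> / 2))))"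
      unfolding exp_add by (simp only: mult.assoc)
    also have "\<dots> = exp ((\<epsilon> / 4) * (1 - \<epsilon>) * (real k + A / \<sigma>\<^sup>2) - (real k / 2) * ln (1 + \<epsilon> / 2)
           - (\<epsilon> / 4) * (A / \<sigma>\<^sup>2) / (1 + \<epsilon> / 2))"
      by (simp only: minus_mult_left[symmetric] diff_conv_add_uminus)
    finally show ?thesis by (simp add: ennreal_mult'[symmetric])
  qed
  also have "\<dots> \<le> ennreal (exp (- \<epsilon>\<^sup>2 * real k / 8))"
    using lower_alg[OF \<epsilon>, of "real k" "A / \<sigma>\<^sup>2"] A \<sigma> by (simp add: ennreal_leI)
  finally have "emeasure G E \<le> ennreal (exp (- \<epsilon>\<^sup>2 * real k / 8))" .
  then have "measure G E \<le> exp (- \<epsilon>\<^sup>2 * real k / 8)"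
    by (simp add: G.emeasure_eq_measure ennreal_le_iff)
  then show ?thesis unfolding G_def E_def T_def Y_def A_def k_def by simp
qed


definition lin_closed :: "(nat \<Rightarrow> real) set \<Rightarrow> bool" where
  "lin_closed V \<longleftrightarrow> (\<lambda>_. 0) \<in> V \<and> (\<forall>v\<in>V. \<forall>w\<in>V. (\<lambda>i. v i + w i) \<in> V) \<and>
     (\<forall>a::real. \<forall>v\<in>V. (\<lambda>i. a * v i) \<in> V)"

lemma lin_closed_sum:
  assumes V: "lin_closed V" and fin: "finite A" and g: "\<And>a. a \<in> A \<Longrightarrow> g a \<in> V"
  shows "(\<lambda>i. \<Sum>a\<in>A. c a * g a i) \<in> V"
  using fin g
proof (induction A rule: finite_induct)
  case empty then show ?case using V unfolding lin_closed_def by simp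
next
  case (insert x F)
  have 1: "(\<lambda>i. c x * g x i) \<in> V" using V insert unfolding lin_closed_def by auto
  have 2: "(\<lambda>i. \<Sum>a\<in>F. c a * g a i) \<in> V" using insert by auto
  from V have add: "\<forall>v\<in>V. \<forall>w\<in>V. (\<lambda>i. v i + w i) \<in> V" unfolding lin_closed_def by blast
  have "(\<lambda>i. c x * g x i + (\<Sum>a\<in>F. c a * g a i)) \<in> V"
    using add[rule_format, OF 1 2] by simp
  then show ?case using insert by simp
qed

lemma lin_closed_vecs: "lin_closed (vecs D)"
  unfolding lin_closed_def vecs_def by auto

lemma lin_closed_subspace: "lin_subspace D S \<Longrightarrow> lin_closed S"
  unfolding lin_closed_def lin_subspace_def by auto

definition inspan :: "nat \<Rightarrow> (nat \<Rightarrow> real) list \<Rightarrow> (nat \<Rightarrow> real) set" where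
  "inspan D L = {w. \<exists>c. \<forall>i<D. w i = (\<Sum>a<length L. c a * (L ! a) i)}"

lemma lin_closed_inspan: "lin_closed (inspan D L)"
  unfolding lin_closed_def inspan_def
proof (intro conjI ballI allI; clarsimp?)
  show "\<exists>c. \<forall>i<D. (\<Sum>a<length L. c a * (L ! a) i) = 0"
    by (rule exI[of _ "\<lambda>_. 0"]) simp
next
  fix c1 c2
  show "\<exists>c. \<forall>i<D. (\<Sum>a<length L. c1 a * (L ! a) i) + (\<Sum>a<length L. c2 a * (L ! a) i) = (\<Sum>a<length L. c a * (L ! a) i)"
    by (rule exI[of _ "\<lambda>a. c1 a + c2 a"]) (simp add: distrib_right sum.distrib)
next
  fix a c1
  show "\<exists>c. \<forall>i<D. a * (\<Sum>a<length L. c1 a * (L ! a) i) = (\<Sum>a<length L. c a * (L ! a) i)"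
    by (rule exI[of _ "\<lambda>b. a * c1 b"]) (simp add: sum_distrib_left mult.assoc)
qed

lemma inspan_cong: "w \<in> inspan D L \<Longrightarrow> (\<And>i. i < D \<Longrightarrow> v i = w i) \<Longrightarrow> v \<in> inspan D L"
  unfolding inspan_def by auto

lemma inspan_nth: "a < length L \<Longrightarrow> L ! a \<in> inspan D L"
proof -
  assume a: "a < length L"
  have "(\<Sum>b<length L. (if b = a then 1 else 0) * (L ! b) i) = (L ! a) i" for i
  proof -
    have "(\<Sum>b<length L. (if b = a then 1 else 0) * (L ! b) i) = (\<Sum>b<length L. if b = a then (L ! b) i else 0)"
      by (intro sum.cong) auto
    also have "\<dots> = (L ! a) i" using a by (simp add: sum.delta')
    finally show ?thesis .
  qed
  then show ?thesis unfolding inspan_def by (intro CollectI exI[of _ "\<lambda>b. if b = a then 1 else 0"]) simp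
qed

lemma inspan_append: "w \<in> inspan D L \<Longrightarrow> w \<in> inspan D (L @ M)"
proof -
  assume "w \<in> inspan D L"
  then obtain c where c: "\<forall>i<D. w i = (\<Sum>a<length L. c a * (L ! a) i)" unfolding inspan_def by auto
  have "\<forall>i<D. w i = (\<Sum>a<length (L @ M). (if a < length L then c a else 0) * ((L @ M) ! a) i)"
  proof (intro allI impI)
    fix i assume "i < D"
    have "(\<Sum>a<length (L @ M). (if a < length L then c a else 0) * ((L @ M) ! a) i)
        = (\<Sum>a\<in>{..<length L}. c a * (L ! a) i)"
    proof (rule sum.mono_neutral_cong_right)
      show "finite {..<length (L @ M)}" by simp
      show "{..<length L} \<subseteq> {..<length (L @ M)}" by auto
      show "\<forall>x\<in>{..<length (L @ M)} - {..<length L}. (if x < length L then c x else 0) * ((L @ M) ! x) i = 0"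
        by simp
      show "(if x < length L then c x else 0) * ((L @ M) ! x) i = c x * (L ! x) i" if "x \<in> {..<length L}" for x
        using that by (simp add: nth_append)
    qed
    then show "w i = (\<Sum>a<length (L @ M). (if a < length L then c a else 0) * ((L @ M) ! a) i)"
      using c \<open>i < D\<close> by simp
  qed
  then show ?thesis unfolding inspan_def
    by (intro CollectI exI[of _ "\<lambda>a. if a < length L then c a else 0"])
qed

definition ON :: "nat \<Rightarrow> (nat \<Rightarrow> real) list \<Rightarrow> bool" where
  "ON D L \<longleftrightarrow> (\<forall>a<length L. \<forall>b<length L. ip D (L ! a) (L ! b) = (if a = b then 1 else 0))"

lemma ip_sum_right: "ip D v (\<lambda>i. \<Sum>a\<in>A. c a * g a i) = (\<Sum>a\<in>A. c a * ip D v (g a))"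
proof -
  have "ip D v (\<lambda>i. \<Sum>a\<in>A. c a * g a i) = (\<Sum>i<D. \<Sum>a\<in>A. c a * (v i * g a i))"
    unfolding ip_def sum_distrib_left by (simp add: mult_ac)
  also have "\<dots> = (\<Sum>a\<in>A. \<Sum>i<D. c a * (v i * g a i))" by (rule sum.swap)
  also have "\<dots> = (\<Sum>a\<in>A. c a * ip D v (g a))" unfolding ip_def sum_distrib_left ..
  finally show ?thesis .
qed

lemma ip_cong_right: "(\<And>i. i < D \<Longrightarrow> w i = w' i) \<Longrightarrow> ip D v w = ip D v w'"
  unfolding ip_def by simp

lemma inspan_coeffs:
  assumes "ON D L" "w \<in> inspan D L"
  shows "\<forall>i<D. w i = (\<Sum>a<length L. ip D (L ! a) w * (L ! a) i)"
proof -
  obtain c where c: "\<forall>i<D. w i = (\<Sum>a<length L. c a * (L ! a) i)" using assms(2) unfolding inspan_def by auto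
  have coef: "ip D (L ! b) w = c b" if "b < length L" for b
  proof -
    have "ip D (L ! b) w = ip D (L ! b) (\<lambda>i. \<Sum>a<length L. c a * (L ! a) i)"
      using c by (intro ip_cong_right) auto
    also have "\<dots> = (\<Sum>a<length L. c a * ip D (L ! b) (L ! a))" by (rule ip_sum_right)
    also have "\<dots> = (\<Sum>a<length L. if a = b then c a else 0)"
      using assms(1) that unfolding ON_def by (intro sum.cong) auto
    also have "\<dots> = c b" using that by simp
    finally show ?thesis .
  qed
  show ?thesis
  proof (intro allI impI)
    fix i assume i: "i < D"
    have "(\<Sum>a<length L. ip D (L ! a) w * (L ! a) i) = (\<Sum>a<length L. c a * (L ! a) i)"
      by (intro sum.cong refl) (simp add: coef)
    then show "w i = (\<Sum>a<length L. ip D (L ! a) w * (L ! a) i)" using c i by simp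
  qed
qed


lemma ip_comm: "ip D v w = ip D w v"
  unfolding ip_def by (simp add: mult.commute)

lemma ip_diff_right: "ip D v (\<lambda>i. x i - y i) = ip D v x - ip D v y"
  unfolding ip_def by (simp add: algebra_simps sum_subtractf)

lemma ip_scale_right: "ip D v (\<lambda>i. x i / s) = ip D v x / s"
  unfolding ip_def by (simp add: sum_divide_distrib)

lemma ip_self_nonneg: "ip D v v \<ge> 0"
  unfolding ip_def by (simp add: sum_nonneg)

lemma ip_self_zero: "ip D v v = 0 \<Longrightarrow> i < D \<Longrightarrow> v i = 0"
  unfolding ip_def using sum_nonneg_eq_0_iff[of "{..<D}" "\<lambda>i. v i * v i"] by simp

definition resid :: "nat \<Rightarrow> (nat \<Rightarrow> real) list \<Rightarrow> (nat \<Rightarrow> real) \<Rightarrow> (nat \<Rightarrow> real)" where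
  "resid D L w = (\<lambda>i. w i - (\<Sum>a<length L. ip D (L ! a) w * (L ! a) i))"

definition gs_step :: "nat \<Rightarrow> (nat \<Rightarrow> real) list \<Rightarrow> (nat \<Rightarrow> real) \<Rightarrow> (nat \<Rightarrow> real) list" where
  "gs_step D L w = (if ip D (resid D L w) (resid D L w) = 0 then L
     else L @ [(\<lambda>i. resid D L w i / sqrt (ip D (resid D L w) (resid D L w)))])"

lemma ip_resid:
  assumes "ON D L" "b < length L"
  shows "ip D (L ! b) (resid D L w) = 0"
proof -
  have "ip D (L ! b) (resid D L w) = ip D (L ! b) w - (\<Sum>a<length L. ip D (L ! a) w * ip D (L ! b) (L ! a))"
    unfolding resid_def ip_diff_right ip_sum_right ..
  also have "(\<Sum>a<length L. ip D (L ! a) w * ip D (L ! b) (L ! a)) = (\<Sum>a<length L. if a = b then ip D (L ! a) w else 0)"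
    using assms unfolding ON_def by (intro sum.cong) auto
  also have "\<dots> = ip D (L ! b) w" using assms(2) by (simp add: sum.delta')
  finally show ?thesis by simp
qed

lemma gs_step_prefix: "\<exists>ext. gs_step D L w = L @ ext"
  unfolding gs_step_def by auto

lemma ON_gs_step:
  assumes "ON D L"
  shows "ON D (gs_step D L w)"
proof (cases "ip D (resid D L w) (resid D L w) = 0")
  case True then show ?thesis using assms unfolding gs_step_def by simp
next
  case False
  define r where "r = resid D L w"
  define s where "s = sqrt (ip D r r)"
  define q where "q = (\<lambda>i. r i / s)"
  have pos: "ip D r r > 0" using False ip_self_nonneg[of D r] unfolding r_def by linarith
  then have s: "s > 0" unfolding s_def by simp
  have eq: "gs_step D L w = L @ [q]" using False unfolding gs_step_def q_def s_def r_def by simp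
  have qq: "ip D q q = 1"
  proof -
    have "ip D q q = ip D r r / (s * s)"
      unfolding q_def ip_def by (simp add: sum_divide_distrib)
    also have "s * s = ip D r r" unfolding s_def using pos by simp
    finally show ?thesis using pos by simp
  qed
  have Lq: "ip D (L ! b) q = 0" if "b < length L" for b
    unfolding q_def ip_scale_right r_def using ip_resid[OF assms that] by simp
  show ?thesis unfolding ON_def eq
  proof (intro allI impI)
    fix a b assume a: "a < length (L @ [q])" and b: "b < length (L @ [q])"
    show "ip D ((L @ [q]) ! a) ((L @ [q]) ! b) = (if a = b then 1 else 0)"
    proof (cases "a < length L")
      case True
      show ?thesis
      proof (cases "b < length L")
        case True
        then show ?thesis using \<open>a < length L\<close> assms unfolding ON_def by (simp add: nth_append)
      next
        case False
        then have "b = length L" using b by simp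
        then show ?thesis using True Lq[OF True] by (simp add: nth_append)
      qed
    next
      case False
      then have a': "a = length L" using a by simp
      show ?thesis
      proof (cases "b < length L")
        case True
        then show ?thesis using a' Lq[OF True] by (simp add: nth_append ip_comm)
      next
        case False
        then have "b = length L" using b by simp
        then show ?thesis using a' qq by (simp add: nth_append)
      qed
    qed
  qed
qed

lemma resid_zero_inspan:
  assumes "ip D (resid D L w) (resid D L w) = 0"
  shows "w \<in> inspan D L"
proof -
  have "\<forall>i<D. w i = (\<Sum>a<length L. ip D (L ! a) w * (L ! a) i)"
    using ip_self_zero[OF assms] unfolding resid_def by auto
  then show ?thesis unfolding inspan_def
    by (intro CollectI exI[of _ "\<lambda>a. ip D (L ! a) w"])
qed

lemma gs_step_inspan:
  shows "w \<in> inspan D (gs_step D L w)"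
proof (cases "ip D (resid D L w) (resid D L w) = 0")
  case True then show ?thesis using resid_zero_inspan[OF True] unfolding gs_step_def by simp
next
  case False
  define r where "r = resid D L w"
  define s where "s = sqrt (ip D r r)"
  define q where "q = (\<lambda>i. r i / s)"
  have pos: "ip D r r > 0" using False ip_self_nonneg[of D r] unfolding r_def by linarith
  then have s: "s > 0" unfolding s_def by simp
  have eq: "gs_step D L w = L @ [q]" using False unfolding gs_step_def q_def s_def r_def by simp
  define c where "c = (\<lambda>a. if a < length L then ip D (L ! a) w else s)"
  have "\<forall>i<D. w i = (\<Sum>a<length (L @ [q]). c a * ((L @ [q]) ! a) i)"
  proof (intro allI impI)
    fix i assume "i < D"
    have "(\<Sum>a<length (L @ [q]). c a * ((L @ [q]) ! a) i) =
        (\<Sum>a<length L. c a * ((L @ [q]) ! a) i) + c (length L) * ((L @ [q]) ! length L) i"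
      by simp
    also have "(\<Sum>a<length L. c a * ((L @ [q]) ! a) i) = (\<Sum>a<length L. ip D (L ! a) w * (L ! a) i)"
      unfolding c_def by (intro sum.cong) (auto simp: nth_append)
    also have "c (length L) * ((L @ [q]) ! length L) i = r i"
      unfolding c_def q_def using s by simp
    finally show "w i = (\<Sum>a<length (L @ [q]). c a * ((L @ [q]) ! a) i)"
      unfolding r_def resid_def by simp
  qed
  then show ?thesis unfolding eq inspan_def by (intro CollectI exI[of _ c])
qed

lemma gs_step_length:
  assumes "w \<notin> inspan D L"
  shows "length (gs_step D L w) = Suc (length L)"
  using assms resid_zero_inspan[of D L w] unfolding gs_step_def by auto

lemma gs_step_closed:
  assumes V: "lin_closed V" and L: "set L \<subseteq> V" and w: "w \<in> V"
  shows "set (gs_step D L w) \<subseteq> V"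
proof -
  have sumV: "(\<lambda>i. \<Sum>a<length L. (- ip D (L ! a) w) * (L ! a) i) \<in> V"
    by (rule lin_closed_sum[OF V]) (use L in auto)
  from V have add: "\<forall>v\<in>V. \<forall>w\<in>V. (\<lambda>i. v i + w i) \<in> V" and sc: "\<forall>a. \<forall>v\<in>V. (\<lambda>i. a * v i) \<in> V"
    unfolding lin_closed_def by blast+
  have "(\<lambda>i. w i + (\<Sum>a<length L. (- ip D (L ! a) w) * (L ! a) i)) \<in> V"
    using add[rule_format, OF w sumV] by simp
  moreover have "(\<lambda>i. w i + (\<Sum>a<length L. (- ip D (L ! a) w) * (L ! a) i)) = resid D L w"
    unfolding resid_def by (simp add: sum_negf)
  ultimately have r: "resid D L w \<in> V" by simp
  have "(\<lambda>i. (1 / sqrt (ip D (resid D L w) (resid D L w))) * resid D L w i) \<in> V"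
    by (rule sc[rule_format, OF r])
  moreover have "(\<lambda>i. (1 / sqrt (ip D (resid D L w) (resid D L w))) * resid D L w i) =
      (\<lambda>i. resid D L w i / sqrt (ip D (resid D L w) (resid D L w)))" by simp
  ultimately show ?thesis using L unfolding gs_step_def by auto
qed

definition gsl :: "nat \<Rightarrow> (nat \<Rightarrow> real) list \<Rightarrow> (nat \<Rightarrow> real) list \<Rightarrow> (nat \<Rightarrow> real) list" where
  "gsl D L ws = foldl (gs_step D) L ws"

lemma gsl_Nil[simp]: "gsl D L [] = L" unfolding gsl_def by simp
lemma gsl_Cons[simp]: "gsl D L (w # ws) = gsl D (gs_step D L w) ws" unfolding gsl_def by simp
lemma gsl_snoc: "gsl D L (ws @ [w]) = gs_step D (gsl D L ws) w" unfolding gsl_def by simp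

lemma ON_gsl: "ON D L \<Longrightarrow> ON D (gsl D L ws)"
  by (induction ws arbitrary: L) (auto intro: ON_gs_step)

lemma gsl_prefix: "\<exists>ext. gsl D L ws = L @ ext"
proof (induction ws arbitrary: L)
  case Nil then show ?case by simp
next
  case (Cons w ws)
  obtain e1 where "gs_step D L w = L @ e1" using gs_step_prefix by blast
  moreover obtain e2 where "gsl D (gs_step D L w) ws = gs_step D L w @ e2" using Cons by blast
  ultimately show ?case by simp
qed

lemma gsl_inspan: "w \<in> set ws \<Longrightarrow> w \<in> inspan D (gsl D L ws)"
proof (induction ws arbitrary: L)
  case Nil then show ?case by simp
next
  case (Cons v ws)
  show ?case
  proof (cases "w = v")
    case True
    obtain e where "gsl D (gs_step D L v) ws = gs_step D L v @ e" using gsl_prefix by blast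
    then show ?thesis using True gs_step_inspan[of w D L] inspan_append by simp
  next
    case False
    then show ?thesis using Cons by simp
  qed
qed

lemma gsl_closed: "lin_closed V \<Longrightarrow> set L \<subseteq> V \<Longrightarrow> set ws \<subseteq> V \<Longrightarrow> set (gsl D L ws) \<subseteq> V"
proof (induction ws arbitrary: L)
  case Nil then show ?case by simp
next
  case (Cons w ws)
  have "set (gs_step D L w) \<subseteq> V" using gs_step_closed[OF Cons(2,3)] Cons(4) by simp
  then show ?case using Cons by simp
qed


definition espan :: "(nat \<Rightarrow> nat \<Rightarrow> real) \<Rightarrow> nat \<Rightarrow> (nat \<Rightarrow> real) set" where
  "espan u j = {v. \<exists>\<beta>. v = (\<lambda>i. \<Sum>l<j. \<beta> l * u l i)}"

lemma lin_closed_espan: "lin_closed (espan u j)"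
  unfolding lin_closed_def espan_def
proof (intro conjI ballI allI; clarsimp?)
  show "\<exists>\<beta>. (\<lambda>_. 0) = (\<lambda>i. \<Sum>l<j. \<beta> l * u l i)"
    by (rule exI[of _ "\<lambda>_. 0"]) simp
next
  fix c1 c2
  show "\<exists>\<beta>. (\<lambda>i. (\<Sum>l<j. c1 l * u l i) + (\<Sum>l<j. c2 l * u l i)) = (\<lambda>i. \<Sum>l<j. \<beta> l * u l i)"
    by (rule exI[of _ "\<lambda>a. c1 a + c2 a"]) (simp add: distrib_right sum.distrib)
next
  fix a c1
  show "\<exists>\<beta>. (\<lambda>i. a * (\<Sum>l<j. c1 l * u l i)) = (\<lambda>i. \<Sum>l<j. \<beta> l * u l i)"
    by (rule exI[of _ "\<lambda>b. a * c1 b"]) (simp add: sum_distrib_left mult.assoc)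
qed

lemma espan_mono: "espan u j \<subseteq> espan u (Suc j)"
proof
  fix v assume "v \<in> espan u j"
  then obtain \<beta> where v: "v = (\<lambda>i. \<Sum>l<j. \<beta> l * u l i)" unfolding espan_def by auto
  have "v = (\<lambda>i. \<Sum>l<Suc j. (if l < j then \<beta> l else 0) * u l i)"
    unfolding v by simp
  then show "v \<in> espan u (Suc j)" unfolding espan_def by (intro CollectI exI)
qed

lemma espan_self: "u j \<in> espan u (Suc j)"
proof -
  have "u j = (\<lambda>i. \<Sum>l<Suc j. (if l = j then 1 else 0) * u l i)"
    by (simp add: if_distrib cong: if_cong)
  then show ?thesis unfolding espan_def by (intro CollectI exI)
qed

definition ee :: "nat \<Rightarrow> nat \<Rightarrow> real" where
  "ee i = (\<lambda>k. if k = i then 1 else 0)"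

lemma ip_ee: "i < D \<Longrightarrow> ip D v (ee i) = v i"
  unfolding ip_def ee_def by (simp add: if_distrib cong: if_cong)

lemma subspace_basis:
  assumes S: "subspace_of_dim D d S"
  obtains f where "orthonormal D D f" "\<And>j. j < d \<Longrightarrow> f j \<in> S"
    "\<And>w j. w \<in> S \<Longrightarrow> d \<le> j \<Longrightarrow> j < D \<Longrightarrow> ip D (f j) w = 0"
    "\<And>z i. i < D \<Longrightarrow> z i = (\<Sum>j<D. ip D (f j) z * f j i)"
    "d \<le> D"
proof -
  have LS: "lin_subspace D S" using S unfolding subspace_of_dim_def by simp
  have SV: "S \<subseteq> vecs D" using LS unfolding lin_subspace_def by simp
  obtain u where u3: "(\<forall>j<d. u j \<in> S) \<and>
        (\<forall>a. (\<forall>i. (\<Sum>j<d. a j * u j i) = 0) \<longrightarrow> (\<forall>j<d. a j = 0)) \<and>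
        (\<forall>v\<in>S. \<exists>a. v = (\<lambda>i. \<Sum>j<d. a j * u j i))"
    using S unfolding subspace_of_dim_def by blast
  have uS: "\<And>j. j < d \<Longrightarrow> u j \<in> S" using u3 by blast
  have ind: "\<And>a. (\<forall>i. (\<Sum>j<d. a j * u j i) = 0) \<Longrightarrow> (\<forall>j<d. a j = 0)" using u3 by blast
  have spn: "\<And>v. v \<in> S \<Longrightarrow> \<exists>a. v = (\<lambda>i. \<Sum>j<d. a j * u j i)" using u3 by blast
  define PP where "PP j = gsl D [] (map u [0..<j])" for j
  have ON0: "ON D []" unfolding ON_def by simp
  have inv: "length (PP j) = j \<and> set (PP j) \<subseteq> espan u j" if "j \<le> d" for j
    using that
  proof (induction j)
    case 0 then show ?case unfolding PP_def by simp
  next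
    case (Suc j)
    then have IH: "length (PP j) = j" "set (PP j) \<subseteq> espan u j" and jd: "j < d" by auto
    have PPS: "PP (Suc j) = gs_step D (PP j) (u j)"
      unfolding PP_def by (simp add: gsl_snoc)
    have notin: "u j \<notin> inspan D (PP j)"
    proof
      assume "u j \<in> inspan D (PP j)"
      then obtain c where c: "\<forall>i<D. u j i = (\<Sum>a<length (PP j). c a * (PP j ! a) i)"
        unfolding inspan_def by auto
      have "(\<lambda>i. \<Sum>a<length (PP j). c a * (PP j ! a) i) \<in> espan u j"
        by (rule lin_closed_sum[OF lin_closed_espan]) (use IH in auto)
      then obtain \<beta> where \<beta>: "(\<lambda>i. \<Sum>a<length (PP j). c a * (PP j ! a) i) = (\<lambda>i. \<Sum>l<j. \<beta> l * u l i)"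
        unfolding espan_def by auto
      have eqall: "u j i = (\<Sum>l<j. \<beta> l * u l i)" for i
      proof (cases "i < D")
        case True
        then show ?thesis using c fun_cong[OF \<beta>, of i] by simp
      next
        case False
        have "u l i = 0" if "l < d" for l using uS[OF that] SV False unfolding vecs_def by auto
        then show ?thesis using jd by simp
      qed
      define \<gamma> where "\<gamma> l = (if l < j then \<beta> l else if l = j then -1 else 0)" for l
      have "\<forall>i. (\<Sum>l<d. \<gamma> l * u l i) = 0"
      proof
        fix i
        have "(\<Sum>l<d. \<gamma> l * u l i) = (\<Sum>l<Suc j. \<gamma> l * u l i)"
          by (rule sum.mono_neutral_right) (use jd in \<open>auto simp: \<gamma>_def\<close>)
        also have "\<dots> = (\<Sum>l<j. \<beta> l * u l i) - u j i"
          by (simp add: \<gamma>_def)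
        finally show "(\<Sum>l<d. \<gamma> l * u l i) = 0" using eqall[of i] by simp
      qed
      then have "\<forall>l<d. \<gamma> l = 0" by (rule ind)
      then have "\<gamma> j = 0" using jd by simp
      then show False unfolding \<gamma>_def by simp
    qed
    have "length (PP (Suc j)) = Suc j"
      unfolding PPS using gs_step_length[OF notin] IH by simp
    moreover have "set (PP (Suc j)) \<subseteq> espan u (Suc j)"
      unfolding PPS
      by (rule gs_step_closed[OF lin_closed_espan]) (use IH espan_mono espan_self in auto)
    ultimately show ?case by simp
  qed
  define P where "P = PP d"
  have Plen: "length P = d" using inv[of d] unfolding P_def by simp
  have PS: "set P \<subseteq> S"
    unfolding P_def PP_def
    by (rule gsl_closed[OF lin_closed_subspace[OF LS]]) (use uS in auto)
  have PON: "ON D P" unfolding P_def PP_def by (rule ON_gsl[OF ON0])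
  have uP: "u j \<in> inspan D P" if "j < d" for j
    unfolding P_def PP_def by (rule gsl_inspan) (use that in simp)
  define F where "F = gsl D P (map ee [0..<D])"
  have FON: "ON D F" unfolding F_def by (rule ON_gsl[OF PON])
  obtain ext where Fext: "F = P @ ext" unfolding F_def using gsl_prefix by blast
  have eeF: "ee i \<in> inspan D F" if "i < D" for i
    unfolding F_def by (rule gsl_inspan) (use that in simp)
  have allF: "z \<in> inspan D F" for z
  proof -
    have "(\<lambda>k. \<Sum>i<D. z i * ee i k) \<in> inspan D F"
      by (rule lin_closed_sum[OF lin_closed_inspan]) (use eeF in auto)
    moreover have "z k = (\<Sum>i<D. z i * ee i k)" if "k < D" for k
      using that unfolding ee_def by (simp add: if_distrib cong: if_cong)
    ultimately show ?thesis by (rule inspan_cong)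
  qed
  have compl: "\<forall>i<D. z i = (\<Sum>a<length F. ip D (F ! a) z * (F ! a) i)" for z
    by (rule inspan_coeffs[OF FON allF])
  have Flen: "length F = D"
  proof -
    have one: "(\<Sum>a<length F. (F ! a) i * (F ! a) i) = 1" if "i < D" for i
    proof -
      have "ee i i = (\<Sum>a<length F. ip D (F ! a) (ee i) * (F ! a) i)" by (rule compl[rule_format, OF that])
      then show ?thesis unfolding ip_ee[OF that] by (simp add: ee_def)
    qed
    have "real D = (\<Sum>i<D. (\<Sum>a<length F. (F ! a) i * (F ! a) i))"
      using one by simp
    also have "\<dots> = (\<Sum>a<length F. ip D (F ! a) (F ! a))"
      unfolding ip_def by (rule sum.swap)
    also have "\<dots> = (\<Sum>a<length F. 1)"
      using FON unfolding ON_def by (intro sum.cong) auto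
    finally show ?thesis by simp
  qed
  define f where "f j = F ! j" for j
  show ?thesis
  proof
    show "orthonormal D D f" using FON Flen unfolding ON_def orthonormal_def f_def by simp
    show "f j \<in> S" if "j < d" for j
      using PS Plen that unfolding f_def Fext by (auto simp: nth_append)
    show "z i = (\<Sum>j<D. ip D (f j) z * f j i)" if "i < D" for z i
      using compl Flen that unfolding f_def by simp
    show "d \<le> D" using Flen Plen Fext by simp
    show "ip D (f j) w = 0" if w: "w \<in> S" and j: "d \<le> j" "j < D" for w j
    proof -
      obtain a where a: "w = (\<lambda>i. \<Sum>l<d. a l * u l i)" using spn[OF w] by auto
      have "w \<in> inspan D P"
        unfolding a by (rule lin_closed_sum[OF lin_closed_inspan]) (use uP in auto)
      then obtain c where c: "\<forall>i<D. w i = (\<Sum>b<length P. c b * (P ! b) i)"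
        unfolding inspan_def by auto
      have "ip D (f j) w = ip D (f j) (\<lambda>i. \<Sum>b<length P. c b * (P ! b) i)"
        using c by (intro ip_cong_right) auto
      also have "\<dots> = (\<Sum>b<length P. c b * ip D (f j) (P ! b))" by (rule ip_sum_right)
      also have "\<dots> = 0"
      proof (intro sum.neutral ballI)
        fix b assume "b \<in> {..<length P}"
        then have b: "b < d" using Plen by simp
        have "P ! b = F ! b" using b Plen unfolding Fext by (simp add: nth_append)
        then have "ip D (f j) (P ! b) = 0"
          using FON Flen b j unfolding ON_def f_def by auto
        then show "c b * ip D (f j) (P ! b) = 0" by simp
      qed
      finally show ?thesis .
    qed
  qed
qed


definition good_basis :: "nat \<Rightarrow> nat \<Rightarrow> (nat \<Rightarrow> real) set \<Rightarrow> (nat \<Rightarrow> nat \<Rightarrow> real) \<Rightarrow> bool" where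
  "good_basis D d S f \<longleftrightarrow> orthonormal D D f \<and> (\<forall>j<d. f j \<in> S) \<and>
    (\<forall>w\<in>S. \<forall>j. d \<le> j \<longrightarrow> j < D \<longrightarrow> ip D (f j) w = 0) \<and>
    (\<forall>z. \<forall>i<D. z i = (\<Sum>j<D. ip D (f j) z * f j i)) \<and> d \<le> D"

lemma good_basis_exists:
  assumes "subspace_of_dim D d S" shows "\<exists>f. good_basis D d S f"
proof -
  obtain f where "orthonormal D D f" "\<And>j. j < d \<Longrightarrow> f j \<in> S"
    "\<And>w j. w \<in> S \<Longrightarrow> d \<le> j \<Longrightarrow> j < D \<Longrightarrow> ip D (f j) w = 0"
    "\<And>z i. i < D \<Longrightarrow> z i = (\<Sum>j<D. ip D (f j) z * f j i)" "d \<le> D"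
    by (rule subspace_basis[OF assms]) blast
  then show ?thesis unfolding good_basis_def by (intro exI[of _ f]) auto
qed

lemma split_sum_lt: fixes d D :: nat shows "d \<le> D \<Longrightarrow> (\<Sum>j<D. g j) = (\<Sum>j<d. g j) + (\<Sum>j\<in>{d..<D}. g j)"
  using sum.atLeastLessThan_concat[of 0 d D g] by (simp add: atLeast0LessThan)

lemma parseval:
  assumes c: "\<And>z i. i < D \<Longrightarrow> z i = (\<Sum>j<D. ip D (f j) z * f j i)"
  shows "(\<Sum>i<D. (v i)\<^sup>2) = (\<Sum>j<D. (ip D (f j) v)\<^sup>2)"
proof -
  have "(\<Sum>i<D. (v i)\<^sup>2) = (\<Sum>i<D. v i * (\<Sum>j<D. ip D (f j) v * f j i))"
    unfolding power2_eq_square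
  proof (intro sum.cong refl)
    fix i assume "i \<in> {..<D}"
    then have "v i = (\<Sum>j<D. ip D (f j) v * f j i)" using c[of i v] by simp
    then show "v i * v i = v i * (\<Sum>j<D. ip D (f j) v * f j i)" by simp
  qed
  also have "\<dots> = (\<Sum>i<D. \<Sum>j<D. ip D (f j) v * (f j i * v i))"
    by (simp add: sum_distrib_left mult_ac)
  also have "\<dots> = (\<Sum>j<D. \<Sum>i<D. ip D (f j) v * (f j i * v i))" by (rule sum.swap)
  also have "\<dots> = (\<Sum>j<D. (ip D (f j) v)\<^sup>2)"
    unfolding ip_def power2_eq_square by (simp add: sum_distrib_left)
  finally show ?thesis .
qed

lemma ip_add_right: "ip D v (\<lambda>i. x i + y i) = ip D v x + ip D v y"
  unfolding ip_def by (simp add: algebra_simps sum.distrib)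

lemma ip_proj:
  assumes "good_basis D d S f" "l < D" and that: "A \<subseteq> {..<D}"
  shows "ip D (f l) (\<lambda>i. \<Sum>j\<in>A. c j * f j i) = (if l \<in> A then c l else 0)"
proof -
  have o: "orthonormal D D f" using assms unfolding good_basis_def by simp
  have "ip D (f l) (\<lambda>i. \<Sum>j\<in>A. c j * f j i) = (\<Sum>j\<in>A. c j * ip D (f l) (f j))" by (rule ip_sum_right)
  also have "\<dots> = (\<Sum>j\<in>A. if j = l then c j else 0)"
    using o assms(2) that unfolding orthonormal_def by (intro sum.cong) auto
  also have "\<dots> = (if l \<in> A then c l else 0)"
    using that finite_subset[OF that] by (simp add: sum.delta')
  finally show ?thesis .
qed

lemma sdist_formula:
  assumes gb: "good_basis D d S f" and LS: "lin_subspace D S"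
  shows "sdist D z S = sqrt (\<Sum>j\<in>{d..<D}. (ip D (f j) z)\<^sup>2)"
proof -
  have c: "\<And>z i. i < D \<Longrightarrow> z i = (\<Sum>j<D. ip D (f j) z * f j i)"
    and fS: "\<And>j. j < d \<Longrightarrow> f j \<in> S"
    and perp: "\<And>w j. w \<in> S \<Longrightarrow> d \<le> j \<Longrightarrow> j < D \<Longrightarrow> ip D (f j) w = 0"
    and dD: "d \<le> D"
    using gb unfolding good_basis_def by auto
  define ws where "ws = (\<lambda>i. \<Sum>j<d. ip D (f j) z * f j i)"
  have wsS: "ws \<in> S" unfolding ws_def
    by (rule lin_closed_sum[OF lin_closed_subspace[OF LS]]) (use fS in auto)
  have enorm_eq: "enorm D (\<lambda>i. z i - w i) = sqrt (\<Sum>j<D. (ip D (f j) z - ip D (f j) w)\<^sup>2)" for w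
    unfolding enorm_def using parseval[OF c, of "\<lambda>i. z i - w i"] by (simp add: ip_diff_right)
  define m where "m = sqrt (\<Sum>j\<in>{d..<D}. (ip D (f j) z)\<^sup>2)"
  have "enorm D (\<lambda>i. z i - ws i) = m"
  proof -
    have "(\<Sum>j<D. (ip D (f j) z - ip D (f j) ws)\<^sup>2) = (\<Sum>j<D. if d \<le> j then (ip D (f j) z)\<^sup>2 else 0)"
    proof (intro sum.cong refl)
      fix j assume j: "j \<in> {..<D}"
      have "ip D (f j) ws = (if j \<in> {..<d} then ip D (f j) z else 0)"
        unfolding ws_def by (rule ip_proj[OF gb]) (use j dD in auto)
      then show "(ip D (f j) z - ip D (f j) ws)\<^sup>2 = (if d \<le> j then (ip D (f j) z)\<^sup>2 else 0)" by auto
    qed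
    also have "\<dots> = (\<Sum>j\<in>{d..<D}. (ip D (f j) z)\<^sup>2)"
      by (rule sum.mono_neutral_cong_right) auto
    finally show ?thesis unfolding enorm_eq m_def by simp
  qed
  moreover have "m \<le> enorm D (\<lambda>i. z i - w i)" if w: "w \<in> S" for w
  proof -
    have "(\<Sum>j\<in>{d..<D}. (ip D (f j) z)\<^sup>2) = (\<Sum>j\<in>{d..<D}. (ip D (f j) z - ip D (f j) w)\<^sup>2)"
      using perp[OF w] by (intro sum.cong) auto
    also have "\<dots> \<le> (\<Sum>j<d. (ip D (f j) z - ip D (f j) w)\<^sup>2) + (\<Sum>j\<in>{d..<D}. (ip D (f j) z - ip D (f j) w)\<^sup>2)"
      by (simp add: sum_nonneg)
    also have "\<dots> = (\<Sum>j<D. (ip D (f j) z - ip D (f j) w)\<^sup>2)"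
      by (rule split_sum_lt[OF dD, symmetric])
    finally show ?thesis unfolding enorm_eq m_def by simp
  qed
  ultimately have "Inf ((\<lambda>w. enorm D (\<lambda>i. z i - w i)) ` S) = m"
    by (intro cInf_eq_minimum) (use wsS in auto)
  then show ?thesis unfolding sdist_def m_def .
qed


lemma sum_shift_d: fixes d D :: nat assumes "d \<le> D"
  shows "(\<Sum>j<D - d. g (d + j)) = (\<Sum>j\<in>{d..<D}. (g j :: real))"
proof -
  have "(\<Sum>j\<in>{d..<D}. g j) = (\<Sum>j\<in>{0 + d..<(D - d) + d}. g j)" using assms by simp
  also have "\<dots> = (\<Sum>j\<in>{0..<D - d}. g (j + d))" by (rule sum.shift_bounds_nat_ivl)
  finally show ?thesis by (simp add: atLeast0LessThan add.commute)
qed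

lemma sdist_sq:
  assumes "good_basis D d S f" "lin_subspace D S"
  shows "(sdist D z S)\<^sup>2 = (\<Sum>j\<in>{d..<D}. (ip D (f j) z)\<^sup>2)"
  unfolding sdist_formula[OF assms] by (simp add: sum_nonneg)

lemma orthonormal_sub: "orthonormal D K f \<Longrightarrow> k \<le> K \<Longrightarrow> orthonormal D k f"
  unfolding orthonormal_def by auto

lemma dist_upper:
  assumes gb: "good_basis D d S f" and LS: "lin_subspace D S" and \<sigma>: "\<sigma> > 0" and \<epsilon>: "0 < \<epsilon>" "\<epsilon> < 1"
  shows "measure (gauss_noise D \<sigma>) {n \<in> space (gauss_noise D \<sigma>).
      (1 + 2 * \<epsilon>) * (\<sigma>\<^sup>2 * real (D - d) + (sdist D x S)\<^sup>2) \<le> (sdist D (\<lambda>i. x i + n i) S)\<^sup>2}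
    \<le> exp (- \<epsilon>\<^sup>2 * real (D - d) / 4)"
proof -
  have o: "orthonormal D D f" and dD: "d \<le> D" using gb unfolding good_basis_def by auto
  define k where "k = D - d"
  define u where "u j = f (d + j)" for j
  define \<alpha> where "\<alpha> j = ip D (f (d + j)) x" for j
  have uo: "orthonormal D k u"
    using o unfolding orthonormal_def u_def k_def by auto
  have R: "(sdist D (\<lambda>i. x i + n i) S)\<^sup>2 = (\<Sum>j<k. (\<alpha> j + ip D (u j) n)\<^sup>2)" for n
  proof -
    have "(sdist D (\<lambda>i. x i + n i) S)\<^sup>2 = (\<Sum>j\<in>{d..<D}. (ip D (f j) x + ip D (f j) n)\<^sup>2)"
      unfolding sdist_sq[OF gb LS] ip_add_right ..
    also have "\<dots> = (\<Sum>j<k. (\<alpha> j + ip D (u j) n)\<^sup>2)"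
      unfolding k_def \<alpha>_def u_def by (rule sum_shift_d[OF dD, symmetric])
    finally show ?thesis .
  qed
  have X: "(sdist D x S)\<^sup>2 = (\<Sum>j<k. (\<alpha> j)\<^sup>2)"
    unfolding sdist_sq[OF gb LS] k_def \<alpha>_def by (rule sum_shift_d[OF dD, symmetric])
  show ?thesis
    using upper_tail[OF \<sigma> \<epsilon> uo, of \<alpha>] unfolding gauss_noise_def R X k_def .
qed

lemma dist_lower:
  assumes gb: "good_basis D d S f" and LS: "lin_subspace D S" and \<sigma>: "\<sigma> > 0" and \<epsilon>: "0 < \<epsilon>" "\<epsilon> < 1"
  shows "measure (gauss_noise D \<sigma>) {n \<in> space (gauss_noise D \<sigma>).
      (sdist D (\<lambda>i. x i + n i) S)\<^sup>2 \<le> (1 - \<epsilon>) * (\<sigma>\<^sup>2 * real (D - d) + (sdist D x S)\<^sup>2)}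
    \<le> exp (- \<epsilon>\<^sup>2 * real (D - d) / 8)"
proof -
  have o: "orthonormal D D f" and dD: "d \<le> D"
    and c: "\<And>z i. i < D \<Longrightarrow> z i = (\<Sum>j<D. ip D (f j) z * f j i)"
    using gb unfolding good_basis_def by auto
  define xt where "xt = (\<lambda>i. \<Sum>j\<in>{d..<D}. ip D (f j) x * f j i)"
  have ipxt: "ip D (f l) xt = (if l \<in> {d..<D} then ip D (f l) x else 0)" if "l < D" for l
    unfolding xt_def by (rule ip_proj[OF gb that]) auto
  have od: "orthonormal D d f" by (rule orthonormal_sub[OF o dD])
  have xe: "ip D (f j) xt = 0" if "j < d" for j
    using ipxt[of j] that dD by simp
  have Y: "(\<Sum>i<D. (xt i + n i)\<^sup>2) - (\<Sum>j<d. (ip D (f j) n)\<^sup>2) = (sdist D (\<lambda>i. x i + n i) S)\<^sup>2" for n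
  proof -
    have "(\<Sum>i<D. (xt i + n i)\<^sup>2) = (\<Sum>l<D. (ip D (f l) xt + ip D (f l) n)\<^sup>2)"
      using parseval[OF c, of "\<lambda>i. xt i + n i"] by (simp add: ip_add_right)
    also have "\<dots> = (\<Sum>l<d. (ip D (f l) xt + ip D (f l) n)\<^sup>2) + (\<Sum>l\<in>{d..<D}. (ip D (f l) xt + ip D (f l) n)\<^sup>2)"
      by (rule split_sum_lt[OF dD])
    also have "(\<Sum>l<d. (ip D (f l) xt + ip D (f l) n)\<^sup>2) = (\<Sum>l<d. (ip D (f l) n)\<^sup>2)"
      using xe by simp
    also have "(\<Sum>l\<in>{d..<D}. (ip D (f l) xt + ip D (f l) n)\<^sup>2) = (\<Sum>l\<in>{d..<D}. (ip D (f l) x + ip D (f l) n)\<^sup>2)"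
      using ipxt by (intro sum.cong) auto
    also have "\<dots> = (sdist D (\<lambda>i. x i + n i) S)\<^sup>2"
      unfolding sdist_sq[OF gb LS] ip_add_right ..
    finally show ?thesis by simp
  qed
  have A: "(\<Sum>i<D. (xt i)\<^sup>2) = (sdist D x S)\<^sup>2"
  proof -
    have "(\<Sum>i<D. (xt i)\<^sup>2) = (\<Sum>l<D. (ip D (f l) xt)\<^sup>2)" by (rule parseval[OF c])
    also have "\<dots> = (\<Sum>l<d. (ip D (f l) xt)\<^sup>2) + (\<Sum>l\<in>{d..<D}. (ip D (f l) xt)\<^sup>2)"
      by (rule split_sum_lt[OF dD])
    also have "\<dots> = (\<Sum>l\<in>{d..<D}. (ip D (f l) x)\<^sup>2)"
      using xe ipxt by simp
    finally show ?thesis unfolding sdist_sq[OF gb LS] .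
  qed
  show ?thesis
    using lower_tail[OF \<sigma> \<epsilon> od dD xe] unfolding gauss_noise_def Y A .
qed


lemma det_bounds:
  fixes a b P Q \<epsilon> :: real
  assumes \<epsilon>: "0 < \<epsilon>" "\<epsilon> < 1" and PQ: "P > 0" "Q > 0" and ab: "a \<ge> 0" "b \<ge> 0"
    and a1: "(1 - \<epsilon>) * P < a\<^sup>2" and a2: "a\<^sup>2 < (1 + 2 * \<epsilon>) * P"
    and b1: "(1 - \<epsilon>) * Q < b\<^sup>2" and b2: "b\<^sup>2 < (1 + 2 * \<epsilon>) * Q"
  shows "1 - ((1 + \<epsilon>) * sqrt P) / ((1 - \<epsilon>) * sqrt Q) \<le> 1 - a / b \<and>
         1 - a / b \<le> 1 - ((1 - \<epsilon>) * sqrt P) / ((1 + \<epsilon>) * sqrt Q)"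
proof -
  have up: "sqrt x \<le> (1 + \<epsilon>) * sqrt R" if "x < (1 + 2 * \<epsilon>) * R" "R > 0" for x R
  proof -
    have "(1 + 2 * \<epsilon>) * R \<le> ((1 + \<epsilon>) * sqrt R)\<^sup>2"
      using that \<epsilon> by (simp add: power_mult_distrib power2_eq_square algebra_simps)
    then have "x \<le> ((1 + \<epsilon>) * sqrt R)\<^sup>2" using that by linarith
    then have "sqrt x \<le> sqrt (((1 + \<epsilon>) * sqrt R)\<^sup>2)" by (rule real_sqrt_le_mono)
    also have "\<dots> = (1 + \<epsilon>) * sqrt R" using \<epsilon> that by simp
    finally show ?thesis .
  qed
  have lo: "(1 - \<epsilon>) * sqrt R \<le> sqrt x" if "(1 - \<epsilon>) * R < x" "R > 0" for x R
  proof -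
    have e2: "(1 - \<epsilon>) * (1 - \<epsilon>) \<le> (1 - \<epsilon>) * 1"
      by (rule mult_left_mono) (use \<epsilon> in auto)
    have "((1 - \<epsilon>) * sqrt R)\<^sup>2 = ((1 - \<epsilon>) * (1 - \<epsilon>)) * R"
      using that by (simp add: power_mult_distrib power2_eq_square)
    also have "\<dots> \<le> ((1 - \<epsilon>) * 1) * R"
      by (rule mult_right_mono[OF e2]) (use that in simp)
    finally have "((1 - \<epsilon>) * sqrt R)\<^sup>2 \<le> (1 - \<epsilon>) * R" by simp
    then have "((1 - \<epsilon>) * sqrt R)\<^sup>2 \<le> x" using that by linarith
    then have "sqrt (((1 - \<epsilon>) * sqrt R)\<^sup>2) \<le> sqrt x" by (rule real_sqrt_le_mono)
    moreover have "sqrt (((1 - \<epsilon>) * sqrt R)\<^sup>2) = (1 - \<epsilon>) * sqrt R" using \<epsilon> that by simp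
    ultimately show ?thesis by simp
  qed
  have aU: "a \<le> (1 + \<epsilon>) * sqrt P" using up[OF a2 PQ(1)] ab by simp
  have aL: "(1 - \<epsilon>) * sqrt P \<le> a" using lo[OF a1 PQ(1)] ab by simp
  have bU: "b \<le> (1 + \<epsilon>) * sqrt Q" using up[OF b2 PQ(2)] ab by simp
  have bL: "(1 - \<epsilon>) * sqrt Q \<le> b" using lo[OF b1 PQ(2)] ab by simp
  have pos: "0 < (1 - \<epsilon>) * sqrt Q" using \<epsilon> PQ by simp
  have bpos: "b > 0" using bL pos by linarith
  have "a / b \<le> ((1 + \<epsilon>) * sqrt P) / ((1 - \<epsilon>) * sqrt Q)"
    by (rule frac_le) (use aU bL pos \<epsilon> PQ in auto)
  moreover have "((1 - \<epsilon>) * sqrt P) / ((1 + \<epsilon>) * sqrt Q) \<le> a / b"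
    by (rule frac_le) (use aL bU bpos ab \<epsilon> PQ in auto)
  ultimately show ?thesis by simp
qed

lemma sdist_meas:
  assumes gb: "good_basis D d S f" and LS: "lin_subspace D S"
  shows "(\<lambda>n. sdist D (\<lambda>i. x i + n i) S) \<in> borel_measurable (gauss_noise D \<sigma>)"
proof -
  have eq: "(\<lambda>n. sdist D (\<lambda>i. x i + n i) S) = (\<lambda>n. sqrt (\<Sum>j\<in>{d..<D}. (\<Sum>i<D. f j i * (x i + n i))\<^sup>2))"
    by (rule ext) (simp add: sdist_formula[OF gb LS] ip_def)
  show ?thesis unfolding eq gauss_noise_def by measurable
qed

theorem theorem1:
  shows "\<exists>c>0. \<forall>D d \<sigma> S1 S2 x \<epsilon>.
    D > d \<and> d \<ge> 1 \<and> \<sigma> > 0 \<and>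
    subspace_of_dim D d S1 \<and> subspace_of_dim D d S2 \<and> x \<in> S1 \<and>
    0 < \<epsilon> \<and> \<epsilon> < 1 \<longrightarrow>
    measure (gauss_noise D \<sigma>)
      {n \<in> space (gauss_noise D \<sigma>).
         1 - ((1 + \<epsilon>) * sqrt (\<sigma>\<^sup>2 * real (D - d))) /
             ((1 - \<epsilon>) * sqrt (\<sigma>\<^sup>2 * real (D - d) + (sdist D x S2)\<^sup>2))
           \<le> affinity_mu D S1 S2 (\<lambda>i. x i + n i) \<and>
         affinity_mu D S1 S2 (\<lambda>i. x i + n i) \<le>
         1 - ((1 - \<epsilon>) * sqrt (\<sigma>\<^sup>2 * real (D - d))) /
             ((1 + \<epsilon>) * sqrt (\<sigma>\<^sup>2 * real (D - d) + (sdist D x S2)\<^sup>2))}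
    \<ge> 1 - 4 * exp (- c * \<epsilon>\<^sup>2 * real (D - d))"
proof (rule exI[of _ "1/8"], intro conjI allI impI)
  show "(0::real) < 1 / 8" by simp
  fix D d :: nat and \<sigma> :: real and S1 S2 :: "(nat \<Rightarrow> real) set" and x :: "nat \<Rightarrow> real" and \<epsilon> :: real
  assume H: "D > d \<and> d \<ge> 1 \<and> \<sigma> > 0 \<and>
    subspace_of_dim D d S1 \<and> subspace_of_dim D d S2 \<and> x \<in> S1 \<and> 0 < \<epsilon> \<and> \<epsilon> < 1"
  then have Dd: "D > d" and \<sigma>: "\<sigma> > 0" and S1: "subspace_of_dim D d S1" and S2: "subspace_of_dim D d S2"
    and xS1: "x \<in> S1" and \<epsilon>: "0 < \<epsilon>" "\<epsilon> < 1" by auto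
  have LS1: "lin_subspace D S1" and LS2: "lin_subspace D S2"
    using S1 S2 unfolding subspace_of_dim_def by auto
  obtain f1 where gb1: "good_basis D d S1 f1" using good_basis_exists[OF S1] by blast
  obtain f2 where gb2: "good_basis D d S2 f2" using good_basis_exists[OF S2] by blast
  define G where "G = gauss_noise D \<sigma>"
  interpret G: prob_space G unfolding G_def gauss_noise_def
    by (intro prob_space_PiM prob_NN \<sigma>)
  define k where "k = real (D - d)"
  have kpos: "k > 0" using Dd unfolding k_def by simp
  define P where "P = \<sigma>\<^sup>2 * k"
  define Q where "Q = \<sigma>\<^sup>2 * k + (sdist D x S2)\<^sup>2"
  have P: "P > 0" unfolding P_def using \<sigma> kpos by simp
  have Q: "Q > 0" unfolding Q_def using P unfolding P_def by (simp add: add_pos_nonneg)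
  have s1: "sdist D x S1 = 0"
  proof -
    have "ip D (f1 j) x = 0" if "j \<in> {d..<D}" for j
      using gb1 xS1 that unfolding good_basis_def by auto
    then show ?thesis unfolding sdist_formula[OF gb1 LS1] by simp
  qed
  note m1[measurable] = sdist_meas[OF gb1 LS1, of x \<sigma>]
  note m2[measurable] = sdist_meas[OF gb2 LS2, of x \<sigma>]
  define E1 where "E1 = {n \<in> space G. (1 + 2 * \<epsilon>) * (\<sigma>\<^sup>2 * real (D - d) + (sdist D x S1)\<^sup>2) \<le> (sdist D (\<lambda>i. x i + n i) S1)\<^sup>2}"
  define E2 where "E2 = {n \<in> space G. (sdist D (\<lambda>i. x i + n i) S1)\<^sup>2 \<le> (1 - \<epsilon>) * (\<sigma>\<^sup>2 * real (D - d) + (sdist D x S1)\<^sup>2)}"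
  define E3 where "E3 = {n \<in> space G. (1 + 2 * \<epsilon>) * (\<sigma>\<^sup>2 * real (D - d) + (sdist D x S2)\<^sup>2) \<le> (sdist D (\<lambda>i. x i + n i) S2)\<^sup>2}"
  define E4 where "E4 = {n \<in> space G. (sdist D (\<lambda>i. x i + n i) S2)\<^sup>2 \<le> (1 - \<epsilon>) * (\<sigma>\<^sup>2 * real (D - d) + (sdist D x S2)\<^sup>2)}"
  have E1s: "E1 \<in> sets G" unfolding E1_def G_def by measurable
  have E2s: "E2 \<in> sets G" unfolding E2_def G_def by measurable
  have E3s: "E3 \<in> sets G" unfolding E3_def G_def by measurable
  have E4s: "E4 \<in> sets G" unfolding E4_def G_def by measurable
  have ee: "exp (- \<epsilon>\<^sup>2 * k / 4) \<le> exp (- \<epsilon>\<^sup>2 * k / 8)"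
    using kpos by simp
  have p1: "measure G E1 \<le> exp (- \<epsilon>\<^sup>2 * k / 8)"
    using dist_upper[OF gb1 LS1 \<sigma> \<epsilon>, of x] ee unfolding E1_def G_def k_def by linarith
  have p2: "measure G E2 \<le> exp (- \<epsilon>\<^sup>2 * k / 8)"
    using dist_lower[OF gb1 LS1 \<sigma> \<epsilon>, of x] unfolding E2_def G_def k_def by linarith
  have p3: "measure G E3 \<le> exp (- \<epsilon>\<^sup>2 * k / 8)"
    using dist_upper[OF gb2 LS2 \<sigma> \<epsilon>, of x] ee unfolding E3_def G_def k_def by linarith
  have p4: "measure G E4 \<le> exp (- \<epsilon>\<^sup>2 * k / 8)"
    using dist_lower[OF gb2 LS2 \<sigma> \<epsilon>, of x] unfolding E4_def G_def k_def by linarith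
  define U where "U = E1 \<union> E2 \<union> E3 \<union> E4"
  have Us: "U \<in> sets G" unfolding U_def using E1s E2s E3s E4s by auto
  have pU: "measure G U \<le> 4 * exp (- \<epsilon>\<^sup>2 * k / 8)"
  proof -
    have "measure G U \<le> measure G (E1 \<union> E2 \<union> E3) + measure G E4"
      unfolding U_def by (rule measure_Un_le) (use E1s E2s E3s E4s in auto)
    also have "measure G (E1 \<union> E2 \<union> E3) \<le> measure G (E1 \<union> E2) + measure G E3"
      by (rule measure_Un_le) (use E1s E2s E3s in auto)
    also have "measure G (E1 \<union> E2) \<le> measure G E1 + measure G E2"
      by (rule measure_Un_le) (use E1s E2s in auto)
    finally show ?thesis using p1 p2 p3 p4 by linarith
  qed
  define Sset where "Sset = {n \<in> space (gauss_noise D \<sigma>).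
         1 - ((1 + \<epsilon>) * sqrt (\<sigma>\<^sup>2 * real (D - d))) /
             ((1 - \<epsilon>) * sqrt (\<sigma>\<^sup>2 * real (D - d) + (sdist D x S2)\<^sup>2))
           \<le> affinity_mu D S1 S2 (\<lambda>i. x i + n i) \<and>
         affinity_mu D S1 S2 (\<lambda>i. x i + n i) \<le>
         1 - ((1 - \<epsilon>) * sqrt (\<sigma>\<^sup>2 * real (D - d))) /
             ((1 + \<epsilon>) * sqrt (\<sigma>\<^sup>2 * real (D - d) + (sdist D x S2)\<^sup>2))}"
  have Ssets: "Sset \<in> sets G"
    unfolding Sset_def G_def affinity_mu_def by measurable
  have sub: "space G - U \<subseteq> Sset"
  proof
    fix n assume n: "n \<in> space G - U"
    define a where "a = sdist D (\<lambda>i. x i + n i) S1"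
    define b where "b = sdist D (\<lambda>i. x i + n i) S2"
    have a0: "a \<ge> 0" unfolding a_def sdist_formula[OF gb1 LS1] by (simp add: sum_nonneg)
    have b0: "b \<ge> 0" unfolding b_def sdist_formula[OF gb2 LS2] by (simp add: sum_nonneg)
    have nsp: "n \<in> space G" using n by simp
    have "n \<notin> E1" "n \<notin> E2" "n \<notin> E3" "n \<notin> E4" using n unfolding U_def by auto
    then have a1: "(1 - \<epsilon>) * P < a\<^sup>2" and a2: "a\<^sup>2 < (1 + 2 * \<epsilon>) * P"
      and b1: "(1 - \<epsilon>) * Q < b\<^sup>2" and b2: "b\<^sup>2 < (1 + 2 * \<epsilon>) * Q"
      using nsp unfolding E1_def E2_def E3_def E4_def a_def b_def P_def Q_def k_def s1 by (auto simp del: of_nat_diff)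
    have "1 - ((1 + \<epsilon>) * sqrt P) / ((1 - \<epsilon>) * sqrt Q) \<le> 1 - a / b \<and>
         1 - a / b \<le> 1 - ((1 - \<epsilon>) * sqrt P) / ((1 + \<epsilon>) * sqrt Q)"
      by (rule det_bounds[OF \<epsilon> P Q a0 b0 a1 a2 b1 b2])
    then show "n \<in> Sset"
      using nsp unfolding Sset_def affinity_mu_def a_def b_def P_def Q_def k_def G_def by simp
  qed
  have "measure G (space G - U) = 1 - measure G U"
    using G.prob_compl[OF Us] by simp
  moreover have "measure G (space G - U) \<le> measure G Sset"
    by (rule G.finite_measure_mono[OF sub Ssets])
  ultimately have fin: "1 - 4 * exp (- \<epsilon>\<^sup>2 * k / 8) \<le> measure G Sset" using pU by linarith
  have e: "- (1 / 8) * \<epsilon>\<^sup>2 * real (D - d) = - \<epsilon>\<^sup>2 * k / 8" unfolding k_def by simp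
  show "1 - 4 * exp (- (1 / 8) * \<epsilon>\<^sup>2 * real (D - d)) \<le> measure (gauss_noise D \<sigma>) Sset"
    unfolding e using fin unfolding G_def .
qed


end
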